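(* Let $\mathfrak{B}$ be a tightly $\sigma$-filtered Boolean algebra and let $\mathcal{H}$ be a family of countable subsets of $\mathfrak{B}$ with $|\mathcal{H}|=\omega_2$. Then there exist $\mathcal{H}'\subseteq\mathcal{H}$ with $|\mathcal{H}'|=\omega_2$ and a countable subalgebra $R\subseteq\mathfrak{B}$ such that for every $n$, every Boolean polynomial $P(x_1,\ldots,x_n)$, every pairwise different $H_1,\ldots,H_n\in\mathcal{H}'$ and every $a_i\in H_i$: if $P(a_1,\ldots,a_n)=0$, then there exist $r_i^-,r_i^+\in R$ with $r_i^-\le a_i\le r_i^+$ ($i=1,\ldots,n$) and $P(r_1^{\varepsilon_1},\ldots,r_n^{\varepsilon_n})=0$ for every choice of signs $\varepsilon_i\in\{+,-\}$.
   Context: For a subset $X$ of a Boolean algebra, $\langle X\rangle$ is the subalgebra generated by $X$. Two subalgebras $A,S$ of a Boolean algebra commute if whenever $a\in A$, $s\in S$ and $a\wedge s=0$, there exist $b_1,b_2\in A\cap S$ with $a\le b_1$, $s\le b_2$, $b_1\wedge b_2=0$. A square of inclusions $R\subseteq A\subseteq B$, $R\subseteq S\subseteq B$ is a push-out diagram if $\langle A\cup S\rangle=B$, $A\cap S=R$, and $A$ and $S$ commute. A Boolean algebra $\mathfrak{B}$ is tightly $\sigma$-filtered if there is an increasing chain of subalgebras $(B_\alpha)_{\alpha<\xi}$ indexed by an ordinal $\xi$ with: $B_0=\{0,1\}$; $\mathfrak{B}=\bigcup_{\alpha<\xi}B_\alpha$; $B_\alpha=\bigcup_{\beta<\alpha}B_\beta$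 for limit $\alpha$; and for every $\alpha<\xi$ there are countable subalgebras $R_\alpha,S_\alpha\subseteq\mathfrak{B}$ such that the inclusions $R_\alpha\subseteq B_\alpha\subseteq B_{\alpha+1}$, $R_\alpha\subseteq S_\alpha\subseteq B_{\alpha+1}$ form a push-out diagram. *)

theory Defs
  imports Main "HOL-Library.Countable_Set"
begin

section \<open>Subalgebras of a Boolean algebra (the ambient algebra is the type 'a, i.e. UNIV)\<close>

definition subalgebra :: "'a::boolean_algebra set \<Rightarrow> bool" where
  "subalgebra A \<longleftrightarrow> bot \<in> A \<and> top \<in> A \<and>
     (\<forall>x\<in>A. \<forall>y\<in>A. inf x y \<in> A \<and> sup x y \<in> A) \<and> (\<forall>x\<in>A. - x \<in> A)"

definition generated :: "'a::boolean_algebra set \<Rightarrow> 'a set" where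
  "generated X = \<Inter>{A. subalgebra A \<and> X \<subseteq> A}"

definition commute :: "'a::boolean_algebra set \<Rightarrow> 'a set \<Rightarrow> bool" where
  "commute A S \<longleftrightarrow> (\<forall>a\<in>A. \<forall>s\<in>S. inf a s = bot \<longrightarrow>
      (\<exists>b1\<in>A \<inter> S. \<exists>b2\<in>A \<inter> S. a \<le> b1 \<and> s \<le> b2 \<and> inf b1 b2 = bot))"

definition pushout :: "'a::boolean_algebra set \<Rightarrow> 'a set \<Rightarrow> 'a set \<Rightarrow> 'a set \<Rightarrow> bool" where
  "pushout R A S B \<longleftrightarrow> R \<subseteq> A \<and> A \<subseteq> B \<and> R \<subseteq> S \<and> S \<subseteq> B \<and>
     generated (A \<union> S) = B \<and> A \<inter> S = R \<and> commute A S"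

section \<open>Tight sigma-filtrations, indexed by a well-ordered type (an ordinal \<xi> > 0)\<close>

definition is_succ :: "'i::wellorder \<Rightarrow> 'i \<Rightarrow> bool" where
  "is_succ \<beta> \<alpha> \<longleftrightarrow> \<alpha> < \<beta> \<and> \<not> (\<exists>\<gamma>. \<alpha> < \<gamma> \<and> \<gamma> < \<beta>)"

definition is_limit :: "'i::wellorder \<Rightarrow> bool" where
  "is_limit \<alpha> \<longleftrightarrow> (\<exists>\<beta>. \<beta> < \<alpha>) \<and> \<not> (\<exists>\<gamma>. is_succ \<alpha> \<gamma>)"

definition tight_sigma_filtration :: "('i::wellorder \<Rightarrow> 'a::boolean_algebra set) \<Rightarrow> bool" where
  "tight_sigma_filtration Bf \<longleftrightarrow>
     (\<forall>\<alpha>. subalgebra (Bf \<alpha>)) \<and>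
     (\<forall>\<alpha> \<beta>. \<alpha> \<le> \<beta> \<longrightarrow> Bf \<alpha> \<subseteq> Bf \<beta>) \<and>
     (\<forall>\<alpha>. (\<forall>\<beta>. \<alpha> \<le> \<beta>) \<longrightarrow> Bf \<alpha> = {bot, top}) \<and>
     (\<Union>\<alpha>. Bf \<alpha>) = UNIV \<and>
     (\<forall>\<alpha>. is_limit \<alpha> \<longrightarrow> Bf \<alpha> = (\<Union>\<beta>\<in>{\<beta>. \<beta> < \<alpha>}. Bf \<beta>)) \<and>
     (\<forall>\<alpha> \<beta>. is_succ \<beta> \<alpha> \<longrightarrow>
        (\<exists>R S. countable R \<and> countable S \<and> subalgebra R \<and> subalgebra S \<and>
               pushout R (Bf \<alpha>) S (Bf \<beta>)))"

text \<open>The Boolean algebra (the type 'a) is tightly sigma-filtered iff some such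
  filtration exists; in the theorem the index type is universally quantified.\<close>

datatype bpoly = Var nat | Zero | One | Meet bpoly bpoly | Join bpoly bpoly | Compl bpoly

primrec beval :: "bpoly \<Rightarrow> (nat \<Rightarrow> 'a::boolean_algebra) \<Rightarrow> 'a" where
  "beval (Var i) v = v i"
| "beval Zero v = bot"
| "beval One v = top"
| "beval (Meet p q) v = inf (beval p v) (beval q v)"
| "beval (Join p q) v = sup (beval p v) (beval q v)"
| "beval (Compl p) v = - beval p v"

primrec bvars :: "bpoly \<Rightarrow> nat set" where
  "bvars (Var i) = {i}"
| "bvars Zero = {}"
| "bvars One = {}"
| "bvars (Meet p q) = bvars p \<union> bvars q"
| "bvars (Join p q) = bvars p \<union> bvars q"
| "bvars (Compl p) = bvars p"

abbreviation omega2 :: "nat set set rel" where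
  "omega2 \<equiv> cardSuc (cardSuc natLeq)"

end

theory Submission
  imports Defs
begin

unbundle cardinal_syntax

abbreviation "w1 \<equiv> cardSuc natLeq"

lemma countable_iff_natLeq: "countable A \<longleftrightarrow> |A| \<le>o natLeq"
proof -
  have "countable A \<longleftrightarrow> |A| \<le>o |UNIV::nat set|"
    unfolding countable_def card_of_ordLeq[symmetric] by auto
  also have "\<dots> \<longleftrightarrow> |A| \<le>o natLeq"
    using card_of_nat ordLeq_ordIso_trans ordIso_symmetric by metis
  finally show ?thesis .
qed

lemma w1_Card: "Card_order w1" by (simp add: cardSuc_Card_order natLeq_Card_order)
lemma w1_Cinf: "Cinfinite w1" by (simp add: Cinfinite_cardSuc natLeq_Cinfinite)
lemma w1_inf: "\<not> finite (Field w1)" using w1_Cinf unfolding cinfinite_def by simp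
lemma w2_Card: "Card_order (cardSuc w1)" by (simp add: cardSuc_Card_order w1_Card)

lemma less_w1: "|A| <o w1 \<longleftrightarrow> countable A"
  using cardSuc_ordLeq_ordLess[OF natLeq_Card_order card_of_Card_order] countable_iff_natLeq by blast

lemma less_w2: "|A| <o cardSuc w1 \<longleftrightarrow> |A| \<le>o w1"
  using cardSuc_ordLeq_ordLess[OF w1_Card card_of_Card_order] by blast

lemma countable_le_w1: "countable A \<Longrightarrow> |A| \<le>o w1"
  using less_w1 ordLess_imp_ordLeq by blast

lemma union_w1: "|I| \<le>o w1 \<Longrightarrow> (\<And>i. i\<in>I \<Longrightarrow> |A i| \<le>o w1) \<Longrightarrow> |\<Union>i\<in>I. A i| \<le>o w1"
  using card_of_UNION_ordLeq_infinite_Field[OF w1_inf w1_Card] by blast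

lemma un_w1: "|A| \<le>o w1 \<Longrightarrow> |B| \<le>o w1 \<Longrightarrow> |A \<union> B| \<le>o w1"
  using card_of_Un_ordLeq_infinite_Field[OF w1_inf] w1_Card by blast

lemma wo_total: "Card_order r \<Longrightarrow> x \<in> Field r \<Longrightarrow> y \<in> Field r \<Longrightarrow> (x,y) \<in> r \<or> (y,x) \<in> r"
  using wo_rel.TOTALS[OF Card_order_wo_rel] by blast

lemma wo_refl: "Card_order r \<Longrightarrow> x \<in> Field r \<Longrightarrow> (x,x) \<in> r"
  using wo_rel.REFL[OF Card_order_wo_rel] unfolding refl_on_def by blast

lemma wo_trans: "Card_order r \<Longrightarrow> (x,y) \<in> r \<Longrightarrow> (y,z) \<in> r \<Longrightarrow> (x,z) \<in> r"
  using wo_rel.TRANS[OF Card_order_wo_rel] unfolding trans_def by blast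

lemma wo_antisym: "Card_order r \<Longrightarrow> (x,y) \<in> r \<Longrightarrow> (y,x) \<in> r \<Longrightarrow> x = y"
  using wo_rel.ANTISYM[OF Card_order_wo_rel] unfolding antisym_def by blast

lemma wo_min: assumes r: "Card_order r" and B: "B \<subseteq> Field r" "B \<noteq> {}"
  shows "\<exists>m\<in>B. \<forall>b\<in>B. (m,b) \<in> r"
proof -
  have "wf (r - Id)" using r unfolding card_order_on_def well_order_on_def by blast
  moreover obtain x0 where "x0 \<in> B" using B(2) by blast
  ultimately obtain m where m: "m \<in> B" "\<And>y. (y,m) \<in> r - Id \<Longrightarrow> y \<notin> B"
    using wfE_min by metis
  show ?thesis
  proof (intro bexI[OF _ m(1)] ballI)
    fix b assume b: "b \<in> B"
    show "(m,b) \<in> r"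
    proof (cases "b = m")
      case True thus ?thesis using wo_refl[OF r] B(1) m(1) by blast
    next
      case False thus ?thesis using m(2)[of b] b wo_total[OF r, of m b] B(1) m(1) by blast
    qed
  qed
qed

lemma underS_sub: "underS r a \<subseteq> Field r"
  unfolding underS_def Field_def by blast

lemma bounded_above:
  assumes r: "Card_order r" and k: "Card_order k" "\<not> finite (Field k)"
  and seg: "\<And>a. a\<in>Field r \<Longrightarrow> |underS r a| \<le>o k"
  and big: "\<not> |Field r| \<le>o k"
  and X: "X \<subseteq> Field r" "|X| \<le>o k"
  shows "\<exists>y\<in>Field r. \<forall>x\<in>X. (x,y) \<in> r \<and> x \<noteq> y"
proof -
  let ?U = "X \<union> (\<Union>x\<in>X. underS r x)"
  have "|\<Union>x\<in>X. underS r x| \<le>o k"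
    using card_of_UNION_ordLeq_infinite_Field[OF k(2) k(1) X(2)] seg X(1) by blast
  hence U: "|?U| \<le>o k" using card_of_Un_ordLeq_infinite_Field[OF k(2) X(2)] k(1) by blast
  have "\<not> Field r \<subseteq> ?U"
  proof
    assume "Field r \<subseteq> ?U"
    hence "|Field r| \<le>o |?U|" by (rule card_of_mono1)
    with U big show False using ordLeq_transitive by blast
  qed
  then obtain y where y: "y \<in> Field r" "y \<notin> ?U" by blast
  show ?thesis
  proof (intro bexI[OF _ y(1)] ballI)
    fix x assume x: "x \<in> X"
    hence "x \<noteq> y" using y by blast
    moreover have "y \<notin> underS r x" using y x by blast
    ultimately show "(x,y) \<in> r \<and> x \<noteq> y"
      using wo_total[OF r, of x y] X(1) x y(1) unfolding underS_def by blast
  qed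
qed

lemma Field_w1_le: "|Field w1| \<le>o w1"
  using card_of_Field_ordIso[OF w1_Card] ordIso_imp_ordLeq by blast

lemma Field_w1_big: "\<not> |Field w1| \<le>o natLeq"
proof
  assume "|Field w1| \<le>o natLeq"
  hence "w1 \<le>o natLeq" using card_of_Field_ordIso[OF w1_Card] ordIso_symmetric ordIso_ordLeq_trans by blast
  thus False using cardSuc_greater[OF natLeq_Card_order] not_ordLess_ordLeq by blast
qed

lemma w1_seg: "a \<in> Field w1 \<Longrightarrow> |underS w1 a| \<le>o natLeq"
  using card_of_underS[OF w1_Card] less_w1 countable_iff_natLeq by blast

lemma pigeon:
  assumes W: "|W| \<le>o w1" and G: "\<not> |G| \<le>o w1"
    and S: "\<And>g. g\<in>G \<Longrightarrow> countable (S g) \<and> S g \<subseteq> W"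
  shows "\<exists>G'\<subseteq>G. \<not> |G'| \<le>o w1 \<and> (\<exists>D. countable D \<and> (\<forall>g\<in>G'. S g \<subseteq> D))"
proof -
  have "|W| \<le>o |Field w1|"
    using ordLeq_ordIso_trans[OF W ordIso_symmetric[OF card_of_Field_ordIso[OF w1_Card]]] .
  hence "\<exists>f. inj_on f W \<and> f ` W \<subseteq> Field w1" by (simp only: card_of_ordLeq)
  then obtain f where f: "inj_on f W" "f ` W \<subseteq> Field w1" by blast
  have ex: "\<exists>c\<in>Field w1. \<forall>x\<in>f ` S g. (x,c) \<in> w1 \<and> x \<noteq> c" if g: "g \<in> G" for g
  proof (rule bounded_above[OF w1_Card natLeq_Card_order])
    show "\<not> finite (Field natLeq)" by (simp add: Field_natLeq)
    show "\<And>a. a \<in> Field w1 \<Longrightarrow> |underS w1 a| \<le>o natLeq" by (rule w1_seg)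
    show "\<not> |Field w1| \<le>o natLeq" by (rule Field_w1_big)
    show "f ` S g \<subseteq> Field w1" using f S[OF g] by blast
    show "|f ` S g| \<le>o natLeq" using S[OF g] countable_iff_natLeq[of "f ` S g"] by auto
  qed
  have "\<forall>g\<in>G. \<exists>c. c \<in> Field w1 \<and> (\<forall>x\<in>f ` S g. (x,c) \<in> w1 \<and> x \<noteq> c)"
    using ex by blast
  then obtain b where b0: "\<forall>g\<in>G. b g \<in> Field w1 \<and> (\<forall>x\<in>f ` S g. (x, b g) \<in> w1 \<and> x \<noteq> b g)"
    by (rule bchoice[elim_format]) blast
  hence b: "\<And>g. g \<in> G \<Longrightarrow> b g \<in> Field w1 \<and> (\<forall>x\<in>f ` S g. (x, b g) \<in> w1 \<and> x \<noteq> b g)"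
    by blast
  have GU: "G = (\<Union>c\<in>Field w1. {g\<in>G. b g = c})" using b by blast
  have "\<exists>c\<in>Field w1. \<not> |{g\<in>G. b g = c}| \<le>o w1"
  proof (rule ccontr)
    assume "\<not> ?thesis"
    hence "|\<Union>c\<in>Field w1. {g\<in>G. b g = c}| \<le>o w1"
      by (intro union_w1[OF Field_w1_le]) blast
    with G show False by (simp only: GU[symmetric])
  qed
  then obtain c where c: "c \<in> Field w1" "\<not> |{g\<in>G. b g = c}| \<le>o w1" by blast
  let ?D = "{x\<in>W. f x \<in> underS w1 c}"
  have cU: "countable (underS w1 c)" using w1_seg[OF c(1)] countable_iff_natLeq[of "underS w1 c"] by auto
  have c1: "countable (f ` ?D)" by (rule countable_subset[OF _ cU]) blast
  have c2: "inj_on f ?D" by (rule inj_on_subset[OF f(1)]) blast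
  have cD: "countable ?D" by (rule countable_image_inj_on[OF c1 c2])
  have "\<forall>g\<in>{g\<in>G. b g = c}. S g \<subseteq> ?D"
  proof (intro ballI subsetI)
    fix g x assume g: "g \<in> {g\<in>G. b g = c}" and x: "x \<in> S g"
    hence "(f x, c) \<in> w1 \<and> f x \<noteq> c" using b[of g] by auto
    thus "x \<in> ?D" using S[of g] g x unfolding underS_def by auto
  qed
  thus ?thesis using c(2) cD by (intro exI[of _ "{g\<in>G. b g = c}"]) blast
qed

lemma w1_WO: "Well_order w1" using card_order_on_well_order_on[OF w1_Card] .

lemma big_sub:
  assumes H: "|H| =o cardSuc w1" and B: "B \<subseteq> H" "\<not> |B| \<le>o w1"
  shows "|B| =o cardSuc w1"
proof -
  have "w1 <o |B|" using B(2) not_ordLeq_iff_ordLess[OF w1_WO card_of_Well_order] by blast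
  hence 1: "cardSuc w1 \<le>o |B|" using cardSuc_ordLess_ordLeq[OF w1_Card card_of_Card_order] by blast
  have 2: "|B| \<le>o cardSuc w1" using ordLeq_ordIso_trans[OF card_of_mono1[OF B(1)] H] .
  show ?thesis using 1 2 ordIso_iff_ordLeq by blast
qed

lemma not_le_w1:
  assumes H: "|H| =o cardSuc w1" shows "\<not> |H| \<le>o w1"
proof
  assume "|H| \<le>o w1"
  hence "cardSuc w1 \<le>o w1" using ordIso_ordLeq_trans[OF ordIso_symmetric[OF H]] by blast
  thus False using not_ordLess_ordLeq[OF cardSuc_greater[OF w1_Card]] by blast
qed

lemma insert_w1: "|A| \<le>o w1 \<Longrightarrow> |insert a A| \<le>o w1"
proof -
  assume A: "|A| \<le>o w1"
  have "|{a}| \<le>o w1" by (rule countable_le_w1) simp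
  hence "|{a} \<union> A| \<le>o w1" using un_w1[OF _ A] by blast
  thus ?thesis by simp
qed

lemma weak_delta:
  fixes F :: "'b \<Rightarrow> 'c set" and H :: "'b set"
  assumes H: "|H| =o cardSuc w1" and Fc: "\<And>h. h\<in>H \<Longrightarrow> countable (F h)"
  shows "\<exists>H'\<subseteq>H. |H'| =o cardSuc w1 \<and>
           (\<exists>D. countable D \<and> (\<forall>h1\<in>H'. \<forall>h2\<in>H'. h1 \<noteq> h2 \<longrightarrow> F h1 \<inter> F h2 \<subseteq> D))"
proof -
  define r where "r = |H|"
  have rC: "Card_order r" unfolding r_def by (rule card_of_Card_order)
  have rF: "Field r = H" unfolding r_def by (rule Field_card_of)
  have rI: "r =o cardSuc w1" unfolding r_def by (rule H)
  have seg: "|underS r a| \<le>o w1" if "a \<in> Field r" for a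
  proof -
    have "|underS r a| <o r" by (rule card_of_underS[OF rC that])
    hence "|underS r a| <o cardSuc w1" using ordLess_ordIso_trans[OF _ rI] by blast
    thus ?thesis using less_w2 by blast
  qed
  have bigr: "\<not> |Field r| \<le>o w1" unfolding rF by (rule not_le_w1[OF H])
  have bnd: "\<exists>y\<in>H. \<forall>x\<in>X. (x,y) \<in> r \<and> x \<noteq> y" if "X \<subseteq> H" "|X| \<le>o w1" for X
    using bounded_above[OF rC w1_Card w1_inf seg bigr] that unfolding rF by blast
  have tot: "(x,y) \<in> r \<or> (y,x) \<in> r" if "x \<in> H" "y \<in> H" for x y
    using wo_total[OF rC] that unfolding rF by blast
  have refl: "(x,x) \<in> r" if "x \<in> H" for x using wo_refl[OF rC] that unfolding rF by blast
  have trans: "(x,y) \<in> r \<Longrightarrow> (y,z) \<in> r \<Longrightarrow> (x,z) \<in> r" for x y z using wo_trans[OF rC] by blast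
  have anti: "(x,y) \<in> r \<Longrightarrow> (y,x) \<in> r \<Longrightarrow> x = y" for x y using wo_antisym[OF rC] by blast
  have inH: "(x,y) \<in> r \<Longrightarrow> x \<in> H \<and> y \<in> H" for x y
    using rF unfolding Field_def by blast
  have usub: "underS r a \<subseteq> H" for a using underS_sub[of r a] rF by simp
  define W where "W \<eta> = (\<Union>\<xi>\<in>underS r \<eta>. F \<xi>)" for \<eta>
  define G where "G \<eta> = {\<xi>\<in>H. F \<xi> \<inter> W \<xi> \<subseteq> W \<eta>}" for \<eta>
  have Wsmall: "|W \<eta>| \<le>o w1" if e: "\<eta> \<in> H" for \<eta>
    unfolding W_def
  proof (rule union_w1)
    show "|underS r \<eta>| \<le>o w1" using seg e rF by blast
    fix i assume "i \<in> underS r \<eta>"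
    hence "i \<in> H" using usub by blast
    thus "|F i| \<le>o w1" using Fc countable_le_w1 by blast
  qed
  have inW: "F \<xi> \<subseteq> W \<eta>" if "(\<xi>,\<eta>) \<in> r" "\<xi> \<noteq> \<eta>" for \<xi> \<eta>
    unfolding W_def underS_def using that by blast
  have key: "F h1 \<inter> F h2 \<subseteq> D" if "G' \<subseteq> G \<eta>" "\<forall>g\<in>G'. F g \<inter> W \<eta> \<subseteq> D" "h1 \<in> G'" "h2 \<in> G'"
       "(h1,h2) \<in> r" "h1 \<noteq> h2" for D \<eta> G' h1 h2
  proof
    fix x assume x: "x \<in> F h1 \<inter> F h2"
    hence "x \<in> F h2 \<inter> W h2" using inW[OF that(5,6)] by blast
    hence "x \<in> W \<eta>" using that(1,4) unfolding G_def by blast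
    thus "x \<in> D" using x that(2,4) by blast
  qed
  show ?thesis
  proof (cases "\<exists>\<eta>\<in>H. \<not> |G \<eta>| \<le>o w1")
    case True
    then obtain \<eta> where e: "\<eta> \<in> H" "\<not> |G \<eta>| \<le>o w1" by blast
    have Sg: "countable (F g \<inter> W \<eta>) \<and> F g \<inter> W \<eta> \<subseteq> W \<eta>" if "g \<in> G \<eta>" for g
      using that Fc unfolding G_def by auto
    obtain G' where G': "G' \<subseteq> G \<eta>" "\<not> |G'| \<le>o w1" "\<exists>D. countable D \<and> (\<forall>g\<in>G'. F g \<inter> W \<eta> \<subseteq> D)"
      using pigeon[OF Wsmall[OF e(1)] e(2), of "\<lambda>g. F g \<inter> W \<eta>"] Sg by blast
    then obtain D where D: "countable D" "\<forall>g\<in>G'. F g \<inter> W \<eta> \<subseteq> D" by blast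
    have GH: "G' \<subseteq> H" using G'(1) unfolding G_def by blast
    have "\<forall>h1\<in>G'. \<forall>h2\<in>G'. h1 \<noteq> h2 \<longrightarrow> F h1 \<inter> F h2 \<subseteq> D"
    proof (intro ballI impI)
      fix h1 h2 assume h: "h1 \<in> G'" "h2 \<in> G'" "h1 \<noteq> h2"
      show "F h1 \<inter> F h2 \<subseteq> D"
      proof (cases "(h1,h2) \<in> r")
        case True thus ?thesis using key[OF G'(1) D(2) h(1,2) _ h(3)] by blast
      next
        case False
        hence "(h2,h1) \<in> r" using tot h GH by blast
        thus ?thesis using key[OF G'(1) D(2) h(2,1) _ h(3)[symmetric]] by blast
      qed
    qed
    thus ?thesis using GH big_sub[OF H GH G'(2)] D(1) by blast
  next
    case False
    hence Gs: "|G \<eta>| \<le>o w1" if "\<eta> \<in> H" for \<eta> using that by blast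
    have "\<forall>\<eta>\<in>H. \<exists>y. y \<in> H \<and> (\<forall>x\<in>insert \<eta> (G \<eta>). (x,y) \<in> r \<and> x \<noteq> y)"
    proof
      fix \<eta> assume e: "\<eta> \<in> H"
      have "|insert \<eta> (G \<eta>)| \<le>o w1" by (rule insert_w1[OF Gs[OF e]])
      moreover have "insert \<eta> (G \<eta>) \<subseteq> H" using e unfolding G_def by auto
      ultimately show "\<exists>y. y \<in> H \<and> (\<forall>x\<in>insert \<eta> (G \<eta>). (x,y) \<in> r \<and> x \<noteq> y)"
        using bnd by blast
    qed
    then obtain hh where hh0: "\<forall>\<eta>\<in>H. hh \<eta> \<in> H \<and> (\<forall>x\<in>insert \<eta> (G \<eta>). (x,hh \<eta>) \<in> r \<and> x \<noteq> hh \<eta>)"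
      by (rule bchoice[elim_format]) blast
    hence hh: "hh \<eta> \<in> H" "\<And>x. x \<in> insert \<eta> (G \<eta>) \<Longrightarrow> (x,hh \<eta>) \<in> r \<and> x \<noteq> hh \<eta>" if "\<eta> \<in> H" for \<eta>
      using that by blast+
    define K where "K = {\<zeta>\<in>H. \<forall>\<eta>\<in>H. (\<eta>,\<zeta>) \<in> r \<and> \<eta> \<noteq> \<zeta> \<longrightarrow> (hh \<eta>, \<zeta>) \<in> r}"
    have KH: "K \<subseteq> H" unfolding K_def by blast
    have unb: "\<exists>k\<in>K. (\<alpha>,k) \<in> r" if a: "\<alpha> \<in> H" for \<alpha>
    proof -
      have "\<forall>\<beta>\<in>H. \<exists>y. y\<in>H \<and> (\<forall>x\<in>insert \<beta> (hh ` underS r \<beta>). (x,y) \<in> r \<and> x \<noteq> y)"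
      proof
        fix \<beta> assume b: "\<beta> \<in> H"
        have "|hh ` underS r \<beta>| \<le>o w1"
          using ordLeq_transitive[OF card_of_image seg] b rF by blast
        hence "|insert \<beta> (hh ` underS r \<beta>)| \<le>o w1" by (rule insert_w1)
        moreover have "insert \<beta> (hh ` underS r \<beta>) \<subseteq> H" using b hh(1) usub by blast
        ultimately show "\<exists>y. y\<in>H \<and> (\<forall>x\<in>insert \<beta> (hh ` underS r \<beta>). (x,y) \<in> r \<and> x \<noteq> y)"
          using bnd by blast
      qed
      then obtain nx where nx0: "\<forall>\<beta>\<in>H. nx \<beta> \<in> H \<and> (\<forall>x\<in>insert \<beta> (hh ` underS r \<beta>). (x,nx \<beta>) \<in> r \<and> x \<noteq> nx \<beta>)"
        by (rule bchoice[elim_format]) blast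
      define s where "s n = (nx ^^ n) \<alpha>" for n
      have sS: "s (Suc n) = nx (s n)" for n unfolding s_def by simp
      have sH: "s n \<in> H" for n by (induction n) (simp_all add: s_def a nx0)
      have sN: "\<And>x. x \<in> insert (s n) (hh ` underS r (s n)) \<Longrightarrow> (x, s (Suc n)) \<in> r" for n
        using nx0 sH[of n] unfolding sS by blast
      have "countable (range s)" by simp
      hence "|range s| \<le>o w1" by (rule countable_le_w1)
      then obtain y where y: "y \<in> H" "\<forall>x\<in>range s. (x,y) \<in> r \<and> x \<noteq> y"
        using bnd[of "range s"] sH by blast
      define UB where "UB = {u\<in>H. \<forall>n. (s n, u) \<in> r}"
      have "UB \<subseteq> Field r" "UB \<noteq> {}" using y rF unfolding UB_def by auto
      then obtain k where k: "k \<in> UB" "\<forall>b\<in>UB. (k,b) \<in> r" using wo_min[OF rC] by blast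
      have "k \<in> K" unfolding K_def
      proof (intro CollectI conjI ballI impI)
        show kH: "k \<in> H" using k unfolding UB_def by blast
        fix \<eta> assume e: "\<eta> \<in> H" "(\<eta>,k) \<in> r \<and> \<eta> \<noteq> k"
        have "\<eta> \<notin> UB" using k(2) e anti by blast
        then obtain n where n: "(s n, \<eta>) \<notin> r" unfolding UB_def using e by blast
        hence "(\<eta>, s n) \<in> r" "\<eta> \<noteq> s n" using tot[OF e(1) sH[of n]] refl[OF e(1)] by auto
        hence "\<eta> \<in> underS r (s n)" unfolding underS_def by blast
        hence "(hh \<eta>, s (Suc n)) \<in> r" using sN[of "hh \<eta>" n] by blast
        moreover have "(s (Suc n), k) \<in> r" using k(1) unfolding UB_def by blast
        ultimately show "(hh \<eta>, k) \<in> r" using trans by blast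
      qed
      moreover have "(s 0,k) \<in> r" using k(1) unfolding UB_def by blast
      moreover have "s 0 = \<alpha>" unfolding s_def by simp
      ultimately show ?thesis by blast
    qed
    have Kbig: "\<not> |K| \<le>o w1"
    proof
      assume Ks: "|K| \<le>o w1"
      obtain y where y: "y \<in> H" "\<forall>x\<in>K. (x,y) \<in> r \<and> x \<noteq> y" using bnd[OF KH Ks] by blast
      obtain k where "k \<in> K" "(y,k) \<in> r" using unb[OF y(1)] by blast
      thus False using y(2) anti by blast
    qed
    have "w1 <o |K|" using Kbig not_ordLeq_iff_ordLess[OF w1_WO card_of_Well_order] by blast
    hence "w1 \<le>o |K|" by (rule ordLess_imp_ordLeq)
    hence "|Field w1| \<le>o |K|"
      by (rule ordIso_ordLeq_trans[OF card_of_Field_ordIso[OF w1_Card]])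
    hence "\<exists>g. inj_on g (Field w1) \<and> g ` Field w1 \<subseteq> K" by (simp only: card_of_ordLeq)
    then obtain g where g: "inj_on g (Field w1)" "g ` Field w1 \<subseteq> K" by blast
    define K0 where "K0 = g ` Field w1"
    have K0s: "|K0| \<le>o w1" unfolding K0_def using ordLeq_transitive[OF card_of_image Field_w1_le] .
    have K0u: "\<not> countable K0"
    proof
      assume "countable K0"
      hence "countable (Field w1)" using countable_image_inj_on[OF _ g(1)] unfolding K0_def by blast
      thus False using Field_w1_big countable_iff_natLeq[of "Field w1"] by simp
    qed
    obtain y where y: "y \<in> H" "\<forall>x\<in>K0. (x,y) \<in> r \<and> x \<noteq> y"
      using bnd[OF _ K0s] g(2) KH unfolding K0_def by blast
    define P where "P = {y\<in>H. \<not> countable (K \<inter> underS r y)}"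
    have "K0 \<subseteq> K \<inter> underS r y" using y g(2) unfolding K0_def underS_def by blast
    hence "y \<in> P" using K0u y(1) countable_subset unfolding P_def by blast
    hence "P \<subseteq> Field r" "P \<noteq> {}" using rF unfolding P_def by auto
    then obtain \<zeta> where z: "\<zeta> \<in> P" "\<forall>p\<in>P. (\<zeta>,p) \<in> r" using wo_min[OF rC] by blast
    have zH: "\<zeta> \<in> H" using z unfolding P_def by blast
    have unc: "\<not> countable (K \<inter> underS r \<zeta>)" using z unfolding P_def by blast
    have minim: "countable (K \<inter> underS r s)" if "s \<in> H" "(s,\<zeta>) \<in> r" "s \<noteq> \<zeta>" for s
    proof (rule ccontr)
      assume "\<not> countable (K \<inter> underS r s)"
      hence "s \<in> P" using that unfolding P_def by blast
      hence "(\<zeta>,s) \<in> r" using z by blast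
      thus False using that anti by blast
    qed
    have claimA: "\<exists>k\<in>K \<inter> underS r \<zeta>. (\<eta>,k) \<in> r \<and> \<eta> \<noteq> k" if e: "\<eta> \<in> H" "(\<eta>,\<zeta>) \<in> r" "\<eta> \<noteq> \<zeta>" for \<eta>
    proof (rule ccontr)
      assume na: "\<not> ?thesis"
      have "K \<inter> underS r \<zeta> \<subseteq> insert \<eta> (K \<inter> underS r \<eta>)"
      proof
        fix k assume k: "k \<in> K \<inter> underS r \<zeta>"
        show "k \<in> insert \<eta> (K \<inter> underS r \<eta>)"
        proof (cases "k = \<eta>")
          case False
          have kH: "k \<in> H" using k KH by blast
          have "(\<eta>,k) \<notin> r" using na k False by blast
          hence "(k,\<eta>) \<in> r" using tot[OF e(1) kH] by blast
          thus ?thesis using k False unfolding underS_def by blast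
        qed simp
      qed
      moreover have "countable (insert \<eta> (K \<inter> underS r \<eta>))" using minim[OF e] by simp
      ultimately have "countable (K \<inter> underS r \<zeta>)" by (rule countable_subset)
      thus False using unc by blast
    qed
    have claimB: "\<exists>k\<in>K \<inter> underS r \<zeta>. \<forall>a\<in>A. (a,k) \<in> r \<and> a \<noteq> k"
      if A: "A \<subseteq> H" "countable A" "\<forall>a\<in>A. (a,\<zeta>) \<in> r \<and> a \<noteq> \<zeta>" for A
    proof -
      have "\<forall>a\<in>A. \<exists>k. k\<in>K \<inter> underS r \<zeta> \<and> (a,k) \<in> r \<and> a \<noteq> k" using claimA A by blast
      then obtain ka where ka: "\<forall>a\<in>A. ka a \<in> K \<inter> underS r \<zeta> \<and> (a,ka a) \<in> r \<and> a \<noteq> ka a"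
        by (rule bchoice[elim_format]) blast
      define U where "U = (\<Union>a\<in>A. insert (ka a) (K \<inter> underS r (ka a)))"
      have "countable U" unfolding U_def
      proof (rule countable_UN[OF A(2)])
        fix a assume a: "a \<in> A"
        have "ka a \<in> H" "(ka a, \<zeta>) \<in> r" "ka a \<noteq> \<zeta>" using ka a KH unfolding underS_def by blast+
        thus "countable (insert (ka a) (K \<inter> underS r (ka a)))" using minim[of "ka a"] by simp
      qed
      hence "\<not> K \<inter> underS r \<zeta> \<subseteq> U" using unc countable_subset[of "K \<inter> underS r \<zeta>" U] by blast
      then obtain k where k: "k \<in> K \<inter> underS r \<zeta>" "k \<notin> U" by blast
      have "\<forall>a\<in>A. (a,k) \<in> r \<and> a \<noteq> k"
      proof
        fix a assume a: "a \<in> A"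
        have nk: "k \<noteq> ka a" "k \<notin> underS r (ka a)" using k a unfolding U_def by blast+
        have "ka a \<in> H" "k \<in> H" using ka a k KH by blast+
        hence "(ka a, k) \<in> r \<or> (k, ka a) \<in> r" by (rule tot)
        hence kk: "(ka a, k) \<in> r" using nk unfolding underS_def by blast
        moreover have ak: "(a, ka a) \<in> r" using ka a by blast
        have "(a,k) \<in> r" using trans[OF ak kk] .
        moreover have "a \<noteq> k"
        proof
          assume "a = k"
          hence "ka a = k" using anti[OF kk] ak by simp
          thus False using nk(1) by simp
        qed
        ultimately show "(a,k) \<in> r \<and> a \<noteq> k" by blast
      qed
      thus ?thesis using k(1) by blast
    qed
    define S where "S = F \<zeta> \<inter> W \<zeta>"
    have "\<forall>x\<in>S. \<exists>\<xi>. \<xi> \<in> underS r \<zeta> \<and> x \<in> F \<xi>" unfolding S_def W_def by blast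
    then obtain xi where xi: "\<forall>x\<in>S. xi x \<in> underS r \<zeta> \<and> x \<in> F (xi x)"
      by (rule bchoice[elim_format]) blast
    have cS: "countable S" unfolding S_def using Fc[OF zH] by simp
    have A1: "xi ` S \<subseteq> H" using xi usub by blast
    have A2: "countable (xi ` S)" using cS by simp
    have A3: "\<forall>a\<in>xi ` S. (a,\<zeta>) \<in> r \<and> a \<noteq> \<zeta>" using xi unfolding underS_def by blast
    obtain k where k: "k \<in> K \<inter> underS r \<zeta>" "\<forall>a\<in>xi ` S. (a,k) \<in> r \<and> a \<noteq> k"
      using claimB[OF A1 A2 A3] by blast
    have kH: "k \<in> H" using k KH by blast
    have "S \<subseteq> W k"
    proof
      fix x assume x: "x \<in> S"
      hence "xi x \<in> underS r k" using k(2) unfolding underS_def by blast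
      thus "x \<in> W k" using xi x unfolding W_def by blast
    qed
    hence "\<zeta> \<in> G k" unfolding G_def S_def using zH by blast
    hence z1: "(\<zeta>, hh k) \<in> r" "\<zeta> \<noteq> hh k" using hh(2)[OF kH] by blast+
    have "(k,\<zeta>) \<in> r" "k \<noteq> \<zeta>" using k(1) unfolding underS_def by blast+
    then obtain k' where k': "k' \<in> K \<inter> underS r \<zeta>" "(k,k') \<in> r" "k \<noteq> k'"
      using claimA[OF kH] by blast
    have "(hh k, k') \<in> r" using k' kH unfolding K_def by blast
    moreover have "(k', \<zeta>) \<in> r" using k' unfolding underS_def by blast
    ultimately have "(hh k, \<zeta>) \<in> r" by (rule trans)
    hence "\<zeta> = hh k" using anti[OF z1(1)] by blast
    thus ?thesis using z1(2) by blast
  qed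
qed

lemma subalgD:
  assumes "subalgebra A"
  shows "bot \<in> A" "top \<in> A" "x \<in> A \<Longrightarrow> y \<in> A \<Longrightarrow> inf x y \<in> A"
    "x \<in> A \<Longrightarrow> y \<in> A \<Longrightarrow> sup x y \<in> A" "x \<in> A \<Longrightarrow> - x \<in> A"
  using assms unfolding subalgebra_def by blast+

lemma subalgebra_generated: "subalgebra (generated X)"
  unfolding subalgebra_def generated_def by blast

lemma generated_sup: "X \<subseteq> generated X"
  unfolding generated_def by blast

lemma generated_least: "subalgebra A \<Longrightarrow> X \<subseteq> A \<Longrightarrow> generated X \<subseteq> A"
  unfolding generated_def by blast

lemma generated_mono: "X \<subseteq> Y \<Longrightarrow> generated X \<subseteq> generated Y"
  unfolding generated_def by blast

lemma generated_idem_un: "generated (generated X \<union> Y) = generated (X \<union> Y)"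
proof
  show "generated (generated X \<union> Y) \<subseteq> generated (X \<union> Y)"
    by (rule generated_least[OF subalgebra_generated])
       (use generated_mono[of X "X \<union> Y"] generated_sup[of "X \<union> Y"] in blast)
  show "generated (X \<union> Y) \<subseteq> generated (generated X \<union> Y)"
    by (rule generated_mono) (use generated_sup[of X] in blast)
qed

lemma beval_in: "subalgebra A \<Longrightarrow> (\<And>i. i \<in> bvars P \<Longrightarrow> v i \<in> A) \<Longrightarrow> beval P v \<in> A"
  by (induction P) (auto intro: subalgD)

lemma beval_cong: "(\<And>i. i \<in> bvars P \<Longrightarrow> v i = w i) \<Longrightarrow> beval P v = beval P w"
  by (induction P) auto

lemma finite_bvars: "finite (bvars P)"
  by (induction P) auto

instance bpoly :: countable by countable_datatype

lemma countable_generated: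
  assumes X: "countable X" shows "countable (generated X)"
proof -
  define Y where "Y = insert bot X"
  have Y: "countable Y" "Y \<noteq> {}" using X unfolding Y_def by auto
  define v where "v = from_nat_into Y"
  define T where "T = range (\<lambda>P. beval P v)"
  have "subalgebra T" unfolding subalgebra_def T_def
  proof (intro conjI ballI)
    show "bot \<in> range (\<lambda>P. beval P v)" by (rule range_eqI[of _ _ Zero]) simp
    show "top \<in> range (\<lambda>P. beval P v)" by (rule range_eqI[of _ _ One]) simp
    fix x y assume "x \<in> range (\<lambda>P. beval P v)" "y \<in> range (\<lambda>P. beval P v)"
    then obtain p q where "x = beval p v" "y = beval q v" by blast
    thus "inf x y \<in> range (\<lambda>P. beval P v)" "sup x y \<in> range (\<lambda>P. beval P v)"
      by (auto intro: range_eqI[of _ _ "Meet p q"] range_eqI[of _ _ "Join p q"])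
  next
    fix x assume "x \<in> range (\<lambda>P. beval P v)"
    then obtain p where "x = beval p v" by blast
    thus "- x \<in> range (\<lambda>P. beval P v)" by (auto intro: range_eqI[of _ _ "Compl p"])
  qed
  moreover have "X \<subseteq> T"
  proof
    fix x assume "x \<in> X"
    hence "x \<in> Y" unfolding Y_def by simp
    then obtain n where "from_nat_into Y n = x" using from_nat_into_surj[OF Y(1)] by blast
    thus "x \<in> T" unfolding T_def v_def by (auto intro: range_eqI[of _ _ "Var n"])
  qed
  ultimately have "generated X \<subseteq> T" by (rule generated_least)
  moreover have "countable T" unfolding T_def by simp
  ultimately show ?thesis using countable_subset by blast
qed

inductive_set J :: "'a::boolean_algebra set \<Rightarrow> 'a set \<Rightarrow> 'a set" for A S where
  Jbot: "bot \<in> J A S"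
| Jat: "a \<in> A \<Longrightarrow> s \<in> S \<Longrightarrow> inf a s \<in> J A S"
| Jsup: "x \<in> J A S \<Longrightarrow> y \<in> J A S \<Longrightarrow> sup x y \<in> J A S"

lemma J_inf_at:
  assumes A: "subalgebra A" and S: "subalgebra S" and a: "a \<in> A" and s: "s \<in> S"
  shows "y \<in> J A S \<Longrightarrow> inf (inf a s) y \<in> J A S"
proof (induction rule: J.induct)
  case Jbot thus ?case by (simp add: J.Jbot)
next
  case (Jat b t)
  have "inf (inf a s) (inf b t) = inf (inf a b) (inf s t)" by (simp add: inf_aci)
  thus ?case using subalgD(3)[OF A a Jat(1)] subalgD(3)[OF S s Jat(2)] J.Jat by metis
next
  case (Jsup x y) thus ?case by (simp add: inf_sup_distrib1 J.Jsup)
qed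

lemma J_inf:
  assumes A: "subalgebra A" and S: "subalgebra S"
  shows "x \<in> J A S \<Longrightarrow> y \<in> J A S \<Longrightarrow> inf x y \<in> J A S"
proof (induction rule: J.induct)
  case Jbot thus ?case by (simp add: J.Jbot)
next
  case (Jat a s) thus ?case using J_inf_at[OF A S] by blast
next
  case (Jsup x z) thus ?case by (simp add: inf_sup_distrib2 J.Jsup)
qed

lemma J_subalg:
  assumes A: "subalgebra A" and S: "subalgebra S"
  shows "subalgebra (J A S)"
  unfolding subalgebra_def
proof (intro conjI ballI)
  show "bot \<in> J A S" by (rule J.Jbot)
  show "top \<in> J A S" using J.Jat[OF subalgD(2)[OF A] subalgD(2)[OF S]] by simp
  fix x y assume "x \<in> J A S" "y \<in> J A S"
  thus "inf x y \<in> J A S" "sup x y \<in> J A S" using J_inf[OF A S] J.Jsup by blast+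
next
  fix x assume "x \<in> J A S"
  thus "- x \<in> J A S"
  proof (induction rule: J.induct)
    case Jbot thus ?case using J.Jat[OF subalgD(2)[OF A] subalgD(2)[OF S]] by simp
  next
    case (Jat a s)
    have "- inf a s = sup (inf (- a) top) (inf top (- s))" by simp
    thus ?case using J.Jsup J.Jat subalgD(2,5)[OF A] subalgD(2,5)[OF S] Jat by metis
  next
    case (Jsup x y) thus ?case using J_inf[OF A S] by simp
  qed
qed

lemma gen_AS_induct[consumes 3, case_names bot at sup]:
  assumes A: "subalgebra A" and S: "subalgebra S" and x: "x \<in> generated (A \<union> S)"
    and "P bot" and "\<And>a s. a \<in> A \<Longrightarrow> s \<in> S \<Longrightarrow> P (inf a s)"
    and "\<And>x y. P x \<Longrightarrow> P y \<Longrightarrow> P (sup x y)"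
  shows "P x"
proof -
  have "A \<union> S \<subseteq> J A S"
  proof
    fix z assume "z \<in> A \<union> S"
    thus "z \<in> J A S"
    proof
      assume "z \<in> A" thus ?thesis using J.Jat[of z A top S] subalgD(2)[OF S] by simp
    next
      assume "z \<in> S" thus ?thesis using J.Jat[of top A z S] subalgD(2)[OF A] by simp
    qed
  qed
  hence "x \<in> J A S" using generated_least[OF J_subalg[OF A S]] x by blast
  thus ?thesis by (induction rule: J.induct) (use assms in auto)
qed

definition scomm :: "'a::boolean_algebra set \<Rightarrow> 'a set \<Rightarrow> 'a set \<Rightarrow> bool" where
  "scomm A C E \<longleftrightarrow> (\<forall>a\<in>A. \<forall>c\<in>C. inf a c = bot \<longrightarrow> (\<exists>e\<in>E. a \<le> e \<and> inf e c = bot))"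

lemma scomm_flip:
  assumes "scomm A C E" "subalgebra E" shows "scomm C A E"
  unfolding scomm_def
proof (intro ballI impI)
  fix c a assume c: "c \<in> C" and a: "a \<in> A" and ca: "inf c a = bot"
  then obtain e where e: "e \<in> E" "a \<le> e" "inf e c = bot"
    using assms(1) unfolding scomm_def by (metis inf_commute)
  have "inf c e = bot" using e(3) by (simp add: inf.commute)
  hence "c \<le> - e" by (simp only: inf_shunt)
  moreover have "inf (- e) a = bot" using e(2) by (simp add: inf_shunt)
  ultimately show "\<exists>e\<in>E. c \<le> e \<and> inf e a = bot" using subalgD(5)[OF assms(2) e(1)] by blast
qed

lemma scomm_sub: "A \<subseteq> E \<Longrightarrow> scomm A C E"
  unfolding scomm_def by blast

lemma scomm_mono: "scomm A C E \<Longrightarrow> A' \<subseteq> A \<Longrightarrow> C' \<subseteq> C \<Longrightarrow> E \<subseteq> E' \<Longrightarrow> scomm A' C' E'"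
  unfolding scomm_def by blast

lemma succ_unique: "is_succ b a \<Longrightarrow> is_succ b' a \<Longrightarrow> b = b'"
  unfolding is_succ_def by (metis neqE)

lemma succ_le: "is_succ b a \<Longrightarrow> a < c \<Longrightarrow> b \<le> c"
  unfolding is_succ_def by (metis not_le)

lemma succ_lessThan: assumes s: "is_succ b a" shows "{..<b} = insert a {..<a}"
proof -
  have ab: "a < b" and nb: "\<And>c. a < c \<Longrightarrow> c < b \<Longrightarrow> False" using s unfolding is_succ_def by blast+
  show ?thesis
  proof (intro set_eqI iffI)
    fix x assume "x \<in> {..<b}"
    hence xb: "x < b" by simp
    show "x \<in> insert a {..<a}"
    proof (cases "x < a")
      case False
      hence "a \<le> x" by simp
      hence "x = a" using nb[of x] xb by (metis order.order_iff_strict)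
      thus ?thesis by simp
    qed simp
  next
    fix x assume "x \<in> insert a {..<a}"
    thus "x \<in> {..<b}" using ab by auto
  qed
qed

locale filt =
  fixes Bf :: "'i::wellorder \<Rightarrow> 'a::boolean_algebra set"
  assumes tsf: "tight_sigma_filtration Bf"
begin

lemma tsfD: "(\<forall>\<alpha>. subalgebra (Bf \<alpha>)) \<and>
     (\<forall>\<alpha> \<beta>. \<alpha> \<le> \<beta> \<longrightarrow> Bf \<alpha> \<subseteq> Bf \<beta>) \<and>
     (\<forall>\<alpha>. (\<forall>\<beta>. \<alpha> \<le> \<beta>) \<longrightarrow> Bf \<alpha> = {bot, top}) \<and>
     (\<Union>\<alpha>. Bf \<alpha>) = UNIV \<and>
     (\<forall>\<alpha>. is_limit \<alpha> \<longrightarrow> Bf \<alpha> = (\<Union>\<beta>\<in>{\<beta>. \<beta> < \<alpha>}. Bf \<beta>)) \<and>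
     (\<forall>\<alpha> \<beta>. is_succ \<beta> \<alpha> \<longrightarrow>
        (\<exists>R S. countable R \<and> countable S \<and> subalgebra R \<and> subalgebra S \<and>
               pushout R (Bf \<alpha>) S (Bf \<beta>)))"
  using tsf unfolding tight_sigma_filtration_def .

lemma Bf_sub: "subalgebra (Bf \<alpha>)" using conjunct1[OF tsfD] by (rule spec)
lemma Bf_mono: "\<alpha> \<le> \<beta> \<Longrightarrow> Bf \<alpha> \<subseteq> Bf \<beta>" using conjunct1[OF conjunct2[OF tsfD]] by blast
lemma Bf_min: "(\<And>\<beta>. \<alpha> \<le> \<beta>) \<Longrightarrow> Bf \<alpha> = {bot, top}" using conjunct1[OF conjunct2[OF conjunct2[OF tsfD]]] by blast
lemma Bf_all: "(\<Union>\<alpha>. Bf \<alpha>) = UNIV" using conjunct1[OF conjunct2[OF conjunct2[OF conjunct2[OF tsfD]]]] .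
lemma Bf_lim: "is_limit \<alpha> \<Longrightarrow> Bf \<alpha> = (\<Union>\<beta>\<in>{\<beta>. \<beta> < \<alpha>}. Bf \<beta>)"
  using conjunct1[OF conjunct2[OF conjunct2[OF conjunct2[OF conjunct2[OF tsfD]]]]] by blast
lemma Bf_succ: "is_succ \<beta> \<alpha> \<Longrightarrow> \<exists>R S. countable R \<and> countable S \<and> subalgebra R \<and> subalgebra S \<and>
               pushout R (Bf \<alpha>) S (Bf \<beta>)"
  using conjunct2[OF conjunct2[OF conjunct2[OF conjunct2[OF conjunct2[OF tsfD]]]]] by blast

definition Sc :: "'i set" where "Sc = {\<alpha>. \<exists>\<beta>. is_succ \<beta> \<alpha>}"
definition sc :: "'i \<Rightarrow> 'i" where "sc \<alpha> = (SOME \<beta>. is_succ \<beta> \<alpha>)"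
definition RS :: "'i \<Rightarrow> 'a set \<times> 'a set" where
  "RS \<alpha> = (SOME p. countable (fst p) \<and> countable (snd p) \<and> subalgebra (fst p) \<and> subalgebra (snd p) \<and>
               pushout (fst p) (Bf \<alpha>) (snd p) (Bf (sc \<alpha>)))"
definition Rr where "Rr \<alpha> = fst (RS \<alpha>)"
definition Ss where "Ss \<alpha> = snd (RS \<alpha>)"
definition G :: "'i set \<Rightarrow> 'a set" where "G X = generated (\<Union>\<beta>\<in>X. Ss \<beta>)"
definition closed :: "'i set \<Rightarrow> bool" where
  "closed X \<longleftrightarrow> X \<subseteq> Sc \<and> (\<forall>\<beta>\<in>X. Rr \<beta> \<subseteq> G (X \<inter> {..<\<beta>}))"

lemma sc_succ: assumes "\<alpha> \<in> Sc" shows "is_succ (sc \<alpha>) \<alpha>"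
proof -
  have "\<exists>\<beta>. is_succ \<beta> \<alpha>" using assms by (simp add: Sc_def)
  thus ?thesis unfolding sc_def by (rule someI_ex)
qed

lemma sc_less: "\<alpha> \<in> Sc \<Longrightarrow> \<alpha> < sc \<alpha>"
  using sc_succ unfolding is_succ_def by blast

lemma RS_prop: assumes "\<alpha> \<in> Sc"
  shows "countable (Rr \<alpha>) \<and> countable (Ss \<alpha>) \<and> subalgebra (Rr \<alpha>) \<and> subalgebra (Ss \<alpha>) \<and>
               pushout (Rr \<alpha>) (Bf \<alpha>) (Ss \<alpha>) (Bf (sc \<alpha>))"
proof -
  obtain R S where "countable R \<and> countable S \<and> subalgebra R \<and> subalgebra S \<and> pushout R (Bf \<alpha>) S (Bf (sc \<alpha>))"
    using Bf_succ[OF sc_succ[OF assms]] by blast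
  hence "\<exists>p. countable (fst p) \<and> countable (snd p) \<and> subalgebra (fst p) \<and> subalgebra (snd p) \<and>
               pushout (fst p) (Bf \<alpha>) (snd p) (Bf (sc \<alpha>))" by (intro exI[of _ "(R,S)"]) simp
  thus ?thesis unfolding Rr_def Ss_def RS_def by (rule someI_ex)
qed

lemma Ss_sub: "\<alpha> \<in> Sc \<Longrightarrow> subalgebra (Ss \<alpha>)" using RS_prop by blast
lemma Ss_count: "\<alpha> \<in> Sc \<Longrightarrow> countable (Ss \<alpha>)" using RS_prop by blast
lemma Rr_count: "\<alpha> \<in> Sc \<Longrightarrow> countable (Rr \<alpha>)" using RS_prop by blast
lemma Rr_Bf: "\<alpha> \<in> Sc \<Longrightarrow> Rr \<alpha> \<subseteq> Bf \<alpha>" using RS_prop unfolding pushout_def by blast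
lemma Ss_Bf: "\<alpha> \<in> Sc \<Longrightarrow> Ss \<alpha> \<subseteq> Bf (sc \<alpha>)" using RS_prop unfolding pushout_def by blast
lemma Bf_sc: "\<alpha> \<in> Sc \<Longrightarrow> Bf (sc \<alpha>) = generated (Bf \<alpha> \<union> Ss \<alpha>)" using RS_prop unfolding pushout_def by metis

lemma sep:
  assumes "\<alpha> \<in> Sc" "b \<in> Bf \<alpha>" "s \<in> Ss \<alpha>" "inf b s = bot"
  shows "\<exists>r\<in>Rr \<alpha>. b \<le> r \<and> inf s r = bot"
proof -
  have "commute (Bf \<alpha>) (Ss \<alpha>)" "Bf \<alpha> \<inter> Ss \<alpha> = Rr \<alpha>" using RS_prop[OF assms(1)] unfolding pushout_def by blast+
  then obtain b1 b2 where "b1 \<in> Rr \<alpha>" "b2 \<in> Rr \<alpha>" "b \<le> b1" "s \<le> b2" "inf b1 b2 = bot"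
    using assms(2-4) unfolding commute_def by metis
  moreover have "inf s b1 \<le> inf b2 b1" using \<open>s \<le> b2\<close> by (simp add: inf.coboundedI1)
  ultimately show ?thesis by (metis inf_commute le_bot)
qed

lemma G_mono: "X \<subseteq> Y \<Longrightarrow> G X \<subseteq> G Y"
  unfolding G_def by (rule generated_mono) blast

lemma G_sub: "subalgebra (G X)" unfolding G_def by (rule subalgebra_generated)

lemma Ss_G: "\<beta> \<in> X \<Longrightarrow> Ss \<beta> \<subseteq> G X" unfolding G_def using generated_sup by blast

lemma G_insert: "G (insert \<beta> X) = generated (G X \<union> Ss \<beta>)"
proof -
  have "G (insert \<beta> X) = generated ((\<Union>\<beta>\<in>X. Ss \<beta>) \<union> Ss \<beta>)" unfolding G_def
    by (rule arg_cong[where f=generated]) blast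
  also have "\<dots> = generated (G X \<union> Ss \<beta>)" unfolding G_def by (rule generated_idem_un[symmetric])
  finally show ?thesis .
qed

lemma G_Bf: assumes "X \<subseteq> Sc" shows "G (X \<inter> {..<\<beta>}) \<subseteq> Bf \<beta>"
  unfolding G_def
proof (rule generated_least[OF Bf_sub])
  show "(\<Union>\<delta>\<in>X \<inter> {..<\<beta>}. Ss \<delta>) \<subseteq> Bf \<beta>"
  proof (intro UN_least)
    fix \<delta> assume d: "\<delta> \<in> X \<inter> {..<\<beta>}"
    hence "\<delta> \<in> Sc" using assms by blast
    hence "Ss \<delta> \<subseteq> Bf (sc \<delta>)" "sc \<delta> \<le> \<beta>" using Ss_Bf succ_le[OF sc_succ] d by auto
    thus "Ss \<delta> \<subseteq> Bf \<beta>" using Bf_mono by blast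
  qed
qed

lemma G_cover:
  assumes Z: "Z \<subseteq> Sc" and I: "I \<noteq> {}"
    and dir: "\<And>d1 d2. d1 \<in> I \<Longrightarrow> d2 \<in> I \<Longrightarrow> \<exists>d\<in>I. d1 \<le> d \<and> d2 \<le> d"
    and cof: "\<And>b. b \<in> Z \<Longrightarrow> \<exists>d\<in>I. b < d"
  shows "G Z \<subseteq> (\<Union>d\<in>I. G (Z \<inter> {..<d}))"
  unfolding G_def[of Z]
proof (rule generated_least)
  let ?U = "\<Union>d\<in>I. G (Z \<inter> {..<d})"
  have two: "\<exists>d\<in>I. x \<in> G (Z \<inter> {..<d}) \<and> y \<in> G (Z \<inter> {..<d})" if xU: "x \<in> ?U" "y \<in> ?U" for x y
  proof -
    obtain d1 d2 where d: "d1 \<in> I" "d2 \<in> I" "x \<in> G (Z \<inter> {..<d1})" "y \<in> G (Z \<inter> {..<d2})" using xU by blast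
    then obtain d where "d \<in> I" "d1 \<le> d" "d2 \<le> d" using dir by blast
    moreover have "G (Z \<inter> {..<d1}) \<subseteq> G (Z \<inter> {..<d})" "G (Z \<inter> {..<d2}) \<subseteq> G (Z \<inter> {..<d})"
      using \<open>d1 \<le> d\<close> \<open>d2 \<le> d\<close> by (auto intro!: G_mono)
    ultimately show ?thesis using d by blast
  qed
  obtain d0 where d0: "d0 \<in> I" using I by blast
  show "subalgebra ?U" unfolding subalgebra_def
  proof (intro conjI ballI)
    show "bot \<in> ?U" using subalgD(1)[OF G_sub, of "Z \<inter> {..<d0}"] d0 by blast
    show "top \<in> ?U" using subalgD(2)[OF G_sub, of "Z \<inter> {..<d0}"] d0 by blast
    fix x y assume xy: "x \<in> ?U" "y \<in> ?U"
    obtain d where d: "d \<in> I" "x \<in> G (Z \<inter> {..<d})" "y \<in> G (Z \<inter> {..<d})" using two[OF xy] by blast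
    have "inf x y \<in> G (Z \<inter> {..<d})" by (rule subalgD(3)[OF G_sub d(2,3)])
    thus "inf x y \<in> ?U" using d(1) by blast
    have "sup x y \<in> G (Z \<inter> {..<d})" by (rule subalgD(4)[OF G_sub d(2,3)])
    thus "sup x y \<in> ?U" using d(1) by blast
  next
    fix x assume "x \<in> ?U"
    then obtain d where d: "d \<in> I" "x \<in> G (Z \<inter> {..<d})" by blast
    have "- x \<in> G (Z \<inter> {..<d})" by (rule subalgD(5)[OF G_sub d(2)])
    thus "- x \<in> ?U" using d(1) by blast
  qed
  show "(\<Union>b\<in>Z. Ss b) \<subseteq> ?U"
  proof (intro UN_least)
    fix b assume b: "b \<in> Z"
    then obtain d where "d \<in> I" "b < d" using cof by blast
    hence "Ss b \<subseteq> G (Z \<inter> {..<d})" using b by (intro Ss_G) simp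
    thus "Ss b \<subseteq> ?U" using \<open>d \<in> I\<close> by blast
  qed
qed


end

lemma ba_sup_bot: "inf x c = bot \<Longrightarrow> inf y c = bot \<Longrightarrow> inf (sup x y) c = (bot::'a::boolean_algebra)"
  by (simp add: inf_sup_distrib2)

lemma ba_cut: "inf (inf (a::'a::boolean_algebra) c) r' = bot \<Longrightarrow> inf (inf a r') c = bot"
  by (simp add: inf_aci)

lemma ba_le_compl: "inf (s::'a::boolean_algebra) r = bot \<Longrightarrow> inf a s \<le> inf a (- r)"
  by (simp add: inf_shunt inf.coboundedI2)

context filt begin

lemma helper1:
  assumes bSc: "\<beta> \<in> Sc"
    and IH: "scomm (G (X \<inter> {..<\<beta>})) (G (Y \<inter> {..<\<beta>})) (G (X \<inter> Y \<inter> {..<\<beta>}))"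
    and cX: "closed X" and cY: "closed Y" and bX: "\<beta> \<in> X"
  shows "scomm (G (insert \<beta> (X \<inter> {..<\<beta>}))) (G (Y \<inter> {..<\<beta>})) (G (X \<inter> Y \<inter> {..<\<beta>}))"
  unfolding scomm_def
proof (intro ballI impI)
  let ?A = "G (X \<inter> {..<\<beta>})" and ?E = "G (X \<inter> Y \<inter> {..<\<beta>})"
  fix a c assume a: "a \<in> G (insert \<beta> (X \<inter> {..<\<beta>}))" and c: "c \<in> G (Y \<inter> {..<\<beta>})" and ac: "inf a c = bot"
  have XS: "X \<subseteq> Sc" and YS: "Y \<subseteq> Sc" using cX cY unfolding closed_def by blast+
  have RA: "Rr \<beta> \<subseteq> ?A" using cX bX unfolding closed_def by blast
  have AB: "?A \<subseteq> Bf \<beta>" by (rule G_Bf[OF XS])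
  have cB: "c \<in> Bf \<beta>" using G_Bf[OF YS] c by blast
  have a': "a \<in> generated (?A \<union> Ss \<beta>)" using a G_insert by simp
  have "inf a c = bot \<longrightarrow> (\<exists>e\<in>?E. a \<le> e \<and> inf e c = bot)"
  proof (rule gen_AS_induct[OF G_sub Ss_sub[OF bSc] a', where P="\<lambda>x. inf x c = bot \<longrightarrow> (\<exists>e\<in>?E. x \<le> e \<and> inf e c = bot)"])
    show "inf bot c = bot \<longrightarrow> (\<exists>e\<in>?E. bot \<le> e \<and> inf e c = bot)"
      using subalgD(1)[OF G_sub, of "X \<inter> Y \<inter> {..<\<beta>}"] by (intro impI bexI[of _ bot]) simp_all
  next
    fix a0 s assume a0: "a0 \<in> ?A" and s: "s \<in> Ss \<beta>"
    show "inf (inf a0 s) c = bot \<longrightarrow> (\<exists>e\<in>?E. inf a0 s \<le> e \<and> inf e c = bot)"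
    proof
      assume h: "inf (inf a0 s) c = bot"
      have "inf (inf a0 c) s = bot" using h by (simp add: inf_aci)
      moreover have "inf a0 c \<in> Bf \<beta>" using subalgD(3)[OF Bf_sub] a0 AB cB by blast
      ultimately obtain r where r: "r \<in> Rr \<beta>" "inf a0 c \<le> r" "inf s r = bot"
        using sep[OF bSc _ s] by blast
      have a1: "inf a0 (- r) \<in> ?A" using subalgD(3)[OF G_sub a0 subalgD(5)[OF G_sub]] r(1) RA by blast
      have "inf (inf a0 c) (- r) = bot" using r(2) by (simp add: inf_shunt)
      hence "inf (inf a0 (- r)) c = bot" by (rule ba_cut)
      then obtain e where e: "e \<in> ?E" "inf a0 (- r) \<le> e" "inf e c = bot"
        using IH a1 c unfolding scomm_def by blast
      have "inf a0 s \<le> inf a0 (- r)" using r(3) by (rule ba_le_compl)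
      thus "\<exists>e\<in>?E. inf a0 s \<le> e \<and> inf e c = bot" using e order_trans by blast
    qed
  next
    fix x y
    assume x: "inf x c = bot \<longrightarrow> (\<exists>e\<in>?E. x \<le> e \<and> inf e c = bot)"
       and y: "inf y c = bot \<longrightarrow> (\<exists>e\<in>?E. y \<le> e \<and> inf e c = bot)"
    show "inf (sup x y) c = bot \<longrightarrow> (\<exists>e\<in>?E. sup x y \<le> e \<and> inf e c = bot)"
    proof
      assume h: "inf (sup x y) c = bot"
      have "inf x c = bot" "inf y c = bot" using h by (simp_all add: inf_sup_distrib2)
      then obtain e1 e2 where e: "e1 \<in> ?E" "x \<le> e1" "inf e1 c = bot" "e2 \<in> ?E" "y \<le> e2" "inf e2 c = bot"
        using x y by blast
      have "sup e1 e2 \<in> ?E" by (rule subalgD(4)[OF G_sub e(1) e(4)])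
      moreover have "sup x y \<le> sup e1 e2" using e(2,5) by (rule sup_mono)
      moreover have "inf (sup e1 e2) c = bot" using e(3,6) by (rule ba_sup_bot)
      ultimately show "\<exists>e\<in>?E. sup x y \<le> e \<and> inf e c = bot" by blast
    qed
  qed
  thus "\<exists>e\<in>?E. a \<le> e \<and> inf e c = bot" using ac by blast
qed

lemma helper2:
  assumes bSc: "\<beta> \<in> Sc"
    and IH: "scomm (G (X \<inter> {..<\<beta>})) (G (Y \<inter> {..<\<beta>})) (G (X \<inter> Y \<inter> {..<\<beta>}))"
    and cX: "closed X" and cY: "closed Y" and bX: "\<beta> \<in> X"
  shows "scomm (G (insert \<beta> (X \<inter> {..<\<beta>}))) (G (insert \<beta> (Y \<inter> {..<\<beta>}))) (G (insert \<beta> (X \<inter> Y \<inter> {..<\<beta>})))"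
  unfolding scomm_def
proof (intro ballI impI)
  let ?A = "G (X \<inter> {..<\<beta>})" and ?C = "G (Y \<inter> {..<\<beta>})" and ?F = "G (X \<inter> Y \<inter> {..<\<beta>})"
  let ?E = "G (insert \<beta> (X \<inter> Y \<inter> {..<\<beta>}))"
  have XS: "X \<subseteq> Sc" and YS: "Y \<subseteq> Sc" using cX cY unfolding closed_def by blast+
  have RA: "Rr \<beta> \<subseteq> ?A" using cX bX unfolding closed_def by blast
  have AB: "?A \<subseteq> Bf \<beta>" by (rule G_Bf[OF XS])
  have CB: "?C \<subseteq> Bf \<beta>" by (rule G_Bf[OF YS])
  have E0E: "?F \<subseteq> ?E" by (rule G_mono) blast
  have SE: "Ss \<beta> \<subseteq> ?E" by (rule Ss_G) simp
  have Esub: "subalgebra ?E" by (rule G_sub)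
  fix a c assume a: "a \<in> G (insert \<beta> (X \<inter> {..<\<beta>}))" and c: "c \<in> G (insert \<beta> (Y \<inter> {..<\<beta>}))"
    and ac: "inf a c = bot"
  have a': "a \<in> generated (?A \<union> Ss \<beta>)" using a G_insert by simp
  have c': "c \<in> generated (?C \<union> Ss \<beta>)" using c G_insert by simp
  have atom: "inf (inf a0 s) c = bot \<longrightarrow> (\<exists>e\<in>?E. inf a0 s \<le> e \<and> inf e c = bot)"
    if a0: "a0 \<in> ?A" and s: "s \<in> Ss \<beta>" and c: "c \<in> generated (?C \<union> Ss \<beta>)" for a0 s c
  proof (rule gen_AS_induct[OF G_sub Ss_sub[OF bSc] c, where P="\<lambda>c. inf (inf a0 s) c = bot \<longrightarrow> (\<exists>e\<in>?E. inf a0 s \<le> e \<and> inf e c = bot)"])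
    show "inf (inf a0 s) bot = bot \<longrightarrow> (\<exists>e\<in>?E. inf a0 s \<le> e \<and> inf e bot = bot)"
      using subalgD(2)[OF Esub] by (intro impI bexI[of _ top]) simp_all
  next
    fix c0 t assume c0: "c0 \<in> ?C" and t: "t \<in> Ss \<beta>"
    show "inf (inf a0 s) (inf c0 t) = bot \<longrightarrow> (\<exists>e\<in>?E. inf a0 s \<le> e \<and> inf e (inf c0 t) = bot)"
    proof
      assume h: "inf (inf a0 s) (inf c0 t) = bot"
      have "inf (inf a0 c0) (inf s t) = bot" using h by (simp add: inf_aci)
      moreover have "inf a0 c0 \<in> Bf \<beta>" using subalgD(3)[OF Bf_sub] a0 c0 AB CB by blast
      moreover have "inf s t \<in> Ss \<beta>" by (rule subalgD(3)[OF Ss_sub[OF bSc] s t])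
      ultimately obtain r where r: "r \<in> Rr \<beta>" "inf a0 c0 \<le> r" "inf (inf s t) r = bot"
        using sep[OF bSc] by blast
      have "- r \<in> ?A" using subalgD(5)[OF G_sub] r(1) RA by blast
      hence a1: "inf a0 (- r) \<in> ?A" by (rule subalgD(3)[OF G_sub a0])
      have "inf (inf a0 c0) (- r) = bot" using r(2) by (simp add: inf_shunt)
      hence "inf (inf a0 (- r)) c0 = bot" by (rule ba_cut)
      then obtain d where d: "d \<in> ?F" "inf a0 (- r) \<le> d" "inf d c0 = bot"
        using IH a1 c0 unfolding scomm_def by blast
      define e where "e = inf s (sup d (- t))"
      have "- t \<in> ?E" using subalgD(5)[OF Esub] t SE by blast
      hence "sup d (- t) \<in> ?E" using subalgD(4)[OF Esub] d(1) E0E by blast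
      hence eE: "e \<in> ?E" unfolding e_def using subalgD(3)[OF Esub] s SE by blast
      have "inf a0 (inf s t) \<le> inf a0 (- r)" using r(3) by (rule ba_le_compl)
      hence "inf (inf a0 s) t \<le> inf a0 (- r)" by (simp only: inf_assoc)
      hence "inf (inf a0 s) t \<le> d" using d(2) by (rule order_trans)
      hence "inf a0 s \<le> sup (- t) d" by (simp add: shunt1)
      hence le: "inf a0 s \<le> e" unfolding e_def by (simp add: sup_commute)
      have "inf e (inf c0 t) = inf s (inf (inf d c0) t)"
        unfolding e_def by (simp add: inf_sup_distrib inf_aci)
      also have "\<dots> = bot" using d(3) by simp
      finally show "\<exists>e\<in>?E. inf a0 s \<le> e \<and> inf e (inf c0 t) = bot" using eE le by blast
    qed
  next
    fix x y
    assume x: "inf (inf a0 s) x = bot \<longrightarrow> (\<exists>e\<in>?E. inf a0 s \<le> e \<and> inf e x = bot)"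
       and y: "inf (inf a0 s) y = bot \<longrightarrow> (\<exists>e\<in>?E. inf a0 s \<le> e \<and> inf e y = bot)"
    show "inf (inf a0 s) (sup x y) = bot \<longrightarrow> (\<exists>e\<in>?E. inf a0 s \<le> e \<and> inf e (sup x y) = bot)"
    proof
      assume h: "inf (inf a0 s) (sup x y) = bot"
      have "inf (inf a0 s) x = bot" "inf (inf a0 s) y = bot" using h by (simp_all add: inf_sup_distrib1)
      then obtain e1 e2 where e: "e1 \<in> ?E" "inf a0 s \<le> e1" "inf e1 x = bot" "e2 \<in> ?E" "inf a0 s \<le> e2" "inf e2 y = bot"
        using x y by blast
      have "inf e1 e2 \<in> ?E" by (rule subalgD(3)[OF Esub e(1) e(4)])
      moreover have "inf a0 s \<le> inf e1 e2" using e(2,5) by simp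
      moreover have "inf (inf e1 e2) (sup x y) = bot"
      proof -
        have "inf (inf e1 e2) x \<le> inf e1 x" by (rule inf_mono[OF inf.cobounded1 order_refl])
        moreover have "inf (inf e1 e2) y \<le> inf e2 y" by (rule inf_mono[OF inf.cobounded2 order_refl])
        ultimately show ?thesis using e(3,6) by (simp add: inf_sup_distrib1 bot_unique)
      qed
      ultimately show "\<exists>e\<in>?E. inf a0 s \<le> e \<and> inf e (sup x y) = bot" by blast
    qed
  qed
  have "\<forall>c\<in>generated (?C \<union> Ss \<beta>). inf a c = bot \<longrightarrow> (\<exists>e\<in>?E. a \<le> e \<and> inf e c = bot)"
  proof (rule gen_AS_induct[OF G_sub Ss_sub[OF bSc] a', where P="\<lambda>a. \<forall>c\<in>generated (?C \<union> Ss \<beta>). inf a c = bot \<longrightarrow> (\<exists>e\<in>?E. a \<le> e \<and> inf e c = bot)"])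
    show "\<forall>c\<in>generated (?C \<union> Ss \<beta>). inf bot c = bot \<longrightarrow> (\<exists>e\<in>?E. bot \<le> e \<and> inf e c = bot)"
      using subalgD(1)[OF Esub] by (intro ballI impI bexI[of _ bot]) simp_all
  next
    fix a0 s assume "a0 \<in> ?A" "s \<in> Ss \<beta>"
    thus "\<forall>c\<in>generated (?C \<union> Ss \<beta>). inf (inf a0 s) c = bot \<longrightarrow> (\<exists>e\<in>?E. inf a0 s \<le> e \<and> inf e c = bot)"
      using atom by blast
  next
    fix x y
    assume x: "\<forall>c\<in>generated (?C \<union> Ss \<beta>). inf x c = bot \<longrightarrow> (\<exists>e\<in>?E. x \<le> e \<and> inf e c = bot)"
       and y: "\<forall>c\<in>generated (?C \<union> Ss \<beta>). inf y c = bot \<longrightarrow> (\<exists>e\<in>?E. y \<le> e \<and> inf e c = bot)"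
    show "\<forall>c\<in>generated (?C \<union> Ss \<beta>). inf (sup x y) c = bot \<longrightarrow> (\<exists>e\<in>?E. sup x y \<le> e \<and> inf e c = bot)"
    proof (intro ballI impI)
      fix c assume c: "c \<in> generated (?C \<union> Ss \<beta>)" and h: "inf (sup x y) c = bot"
      have "inf x c = bot" "inf y c = bot" using h by (simp_all add: inf_sup_distrib2)
      then obtain e1 e2 where e: "e1 \<in> ?E" "x \<le> e1" "inf e1 c = bot" "e2 \<in> ?E" "y \<le> e2" "inf e2 c = bot"
        using x y c by blast
      have "sup e1 e2 \<in> ?E" by (rule subalgD(4)[OF Esub e(1) e(4)])
      moreover have "sup x y \<le> sup e1 e2" using e(2,5) by (rule sup_mono)
      moreover have "inf (sup e1 e2) c = bot" using e(3,6) by (rule ba_sup_bot)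
      ultimately show "\<exists>e\<in>?E. sup x y \<le> e \<and> inf e c = bot" by blast
    qed
  qed
  thus "\<exists>e\<in>?E. a \<le> e \<and> inf e c = bot" using c' ac by blast
qed

end

lemma trichotomy_cases:
  fixes \<gamma> :: "'i::wellorder"
  obtains (succ) \<beta> where "is_succ \<gamma> \<beta>" | (lim) "is_limit \<gamma>" | (min) "\<And>\<beta>. \<gamma> \<le> \<beta>"
proof -
  consider "\<exists>\<beta>. is_succ \<gamma> \<beta>" | "is_limit \<gamma>" | "\<not> (\<exists>\<beta>. is_succ \<gamma> \<beta>) \<and> \<not> is_limit \<gamma>" by blast
  thus ?thesis
  proof cases
    case 3
    hence "\<not> (\<exists>\<beta>. \<beta> < \<gamma>)" unfolding is_limit_def by blast
    hence "\<And>\<beta>. \<gamma> \<le> \<beta>" by (simp add: not_less)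
    thus ?thesis using that(3) by blast
  qed (use that in blast)+
qed

context filt begin

lemma closed_Sc: "closed X \<Longrightarrow> X \<subseteq> Sc" unfolding closed_def by blast

lemma closed_Int_lt: assumes "closed X" shows "closed (X \<inter> {..<\<gamma>})"
  unfolding closed_def
proof (intro conjI ballI)
  show "X \<inter> {..<\<gamma>} \<subseteq> Sc" using assms closed_Sc by blast
  fix b assume b: "b \<in> X \<inter> {..<\<gamma>}"
  hence "Rr b \<subseteq> G (X \<inter> {..<b})" using assms unfolding closed_def by blast
  moreover have "X \<inter> {..<b} = X \<inter> {..<\<gamma>} \<inter> {..<b}" using b by auto
  ultimately show "Rr b \<subseteq> G (X \<inter> {..<\<gamma>} \<inter> {..<b})" by simp
qed

lemma closed_Union: assumes "\<And>X. X \<in> XX \<Longrightarrow> closed X" shows "closed (\<Union>XX)"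
  unfolding closed_def
proof (intro conjI ballI)
  show "\<Union>XX \<subseteq> Sc" using assms closed_Sc by blast
  fix b assume "b \<in> \<Union>XX"
  then obtain X where X: "X \<in> XX" "b \<in> X" by blast
  hence "Rr b \<subseteq> G (X \<inter> {..<b})" using assms unfolding closed_def by blast
  moreover have "G (X \<inter> {..<b}) \<subseteq> G (\<Union>XX \<inter> {..<b})" by (rule G_mono) (use X in blast)
  ultimately show "Rr b \<subseteq> G (\<Union>XX \<inter> {..<b})" by blast
qed

lemma closed_Un: "closed X \<Longrightarrow> closed Y \<Longrightarrow> closed (X \<union> Y)"
  using closed_Union[of "{X,Y}"] by auto

lemma cover_lim:
  assumes Z: "Z \<subseteq> Sc" and lim: "is_limit \<gamma>" and a: "a \<in> G (Z \<inter> {..<\<gamma>})"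
  shows "\<exists>d<\<gamma>. a \<in> G (Z \<inter> {..<d})"
proof -
  have "G (Z \<inter> {..<\<gamma>}) \<subseteq> (\<Union>d\<in>{..<\<gamma>}. G (Z \<inter> {..<\<gamma>} \<inter> {..<d}))"
  proof (rule G_cover)
    show "Z \<inter> {..<\<gamma>} \<subseteq> Sc" using Z by blast
    show "{..<\<gamma>} \<noteq> {}" using lim unfolding is_limit_def by auto
    fix d1 d2 assume "d1 \<in> {..<\<gamma>}" "d2 \<in> {..<\<gamma>}"
    thus "\<exists>d\<in>{..<\<gamma>}. d1 \<le> d \<and> d2 \<le> d" by (intro bexI[of _ "max d1 d2"]) auto
  next
    fix b assume b: "b \<in> Z \<inter> {..<\<gamma>}"
    hence bS: "b \<in> Sc" using Z by blast
    have "sc b \<le> \<gamma>" using succ_le[OF sc_succ[OF bS]] b by simp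
    moreover have "sc b \<noteq> \<gamma>" using sc_succ[OF bS] lim unfolding is_limit_def by blast
    ultimately have "sc b < \<gamma>" by simp
    thus "\<exists>d\<in>{..<\<gamma>}. b < d" using sc_less[OF bS] by auto
  qed
  then obtain d where "d < \<gamma>" "a \<in> G (Z \<inter> {..<\<gamma>} \<inter> {..<d})" using a by blast
  moreover have "Z \<inter> {..<\<gamma>} \<inter> {..<d} = Z \<inter> {..<d}" using \<open>d < \<gamma>\<close> by auto
  ultimately show ?thesis by auto
qed

lemma cover_all:
  assumes Z: "Z \<subseteq> Sc" and a: "a \<in> G Z"
  shows "\<exists>d. a \<in> G (Z \<inter> {..<d})"
proof -
  have "G Z \<subseteq> (\<Union>d\<in>UNIV. G (Z \<inter> {..<d}))"
  proof (rule G_cover[OF Z])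
    fix d1 d2 :: 'i show "\<exists>d\<in>UNIV. d1 \<le> d \<and> d2 \<le> d" by (intro bexI[of _ "max d1 d2"]) auto
  next
    fix b assume "b \<in> Z"
    thus "\<exists>d\<in>UNIV. b < d" using sc_less Z by blast
  qed simp
  thus ?thesis using a by blast
qed

lemma scomm_lt:
  "\<forall>X Y. closed X \<longrightarrow> closed Y \<longrightarrow> scomm (G (X \<inter> {..<\<gamma>})) (G (Y \<inter> {..<\<gamma>})) (G (X \<inter> Y \<inter> {..<\<gamma>}))"
proof (induction \<gamma> rule: less_induct)
  case (less \<gamma>)
  show ?case
  proof (intro allI impI)
    fix X Y assume cX: "closed X" and cY: "closed Y"
    show "scomm (G (X \<inter> {..<\<gamma>})) (G (Y \<inter> {..<\<gamma>})) (G (X \<inter> Y \<inter> {..<\<gamma>}))"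
    proof (cases \<gamma> rule: trichotomy_cases)
      case min
      hence "{..<\<gamma>} = {}" by (auto simp: not_less[symmetric])
      thus ?thesis by (simp add: scomm_sub)
    next
      case lim
      show ?thesis unfolding scomm_def
      proof (intro ballI impI)
        fix a c assume a: "a \<in> G (X \<inter> {..<\<gamma>})" and c: "c \<in> G (Y \<inter> {..<\<gamma>})" and ac: "inf a c = bot"
        obtain d1 where d1: "d1 < \<gamma>" "a \<in> G (X \<inter> {..<d1})" using cover_lim[OF closed_Sc[OF cX] lim a] by blast
        obtain d2 where d2: "d2 < \<gamma>" "c \<in> G (Y \<inter> {..<d2})" using cover_lim[OF closed_Sc[OF cY] lim c] by blast
        define d where "d = max d1 d2"
        have dl: "d < \<gamma>" using d1 d2 unfolding d_def by simp
        have "G (X \<inter> {..<d1}) \<subseteq> G (X \<inter> {..<d})" by (rule G_mono) (auto simp: d_def less_max_iff_disj)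
        hence "a \<in> G (X \<inter> {..<d})" using d1(2) by blast
        moreover have "G (Y \<inter> {..<d2}) \<subseteq> G (Y \<inter> {..<d})" by (rule G_mono) (auto simp: d_def less_max_iff_disj)
        hence "c \<in> G (Y \<inter> {..<d})" using d2(2) by blast
        moreover have "scomm (G (X \<inter> {..<d})) (G (Y \<inter> {..<d})) (G (X \<inter> Y \<inter> {..<d}))"
          using less dl cX cY by blast
        ultimately obtain e where e: "e \<in> G (X \<inter> Y \<inter> {..<d})" "a \<le> e" "inf e c = bot"
          using ac unfolding scomm_def by blast
        have "G (X \<inter> Y \<inter> {..<d}) \<subseteq> G (X \<inter> Y \<inter> {..<\<gamma>})" by (rule G_mono) (use dl in auto)
        thus "\<exists>e\<in>G (X \<inter> Y \<inter> {..<\<gamma>}). a \<le> e \<and> inf e c = bot" using e by blast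
      qed
    next
      case (succ \<beta>)
      have bS: "\<beta> \<in> Sc" using succ unfolding Sc_def by blast
      have bl: "\<beta> < \<gamma>" using succ unfolding is_succ_def by blast
      have lt: "{..<\<gamma>} = insert \<beta> {..<\<beta>}" by (rule succ_lessThan[OF succ])
      have IH: "scomm (G (X' \<inter> {..<\<beta>})) (G (Y' \<inter> {..<\<beta>})) (G (X' \<inter> Y' \<inter> {..<\<beta>}))"
        if "closed X'" "closed Y'" for X' Y' using less bl that by blast
      have ins: "Z \<inter> {..<\<gamma>} = (if \<beta> \<in> Z then insert \<beta> (Z \<inter> {..<\<beta>}) else Z \<inter> {..<\<beta>})" for Z
        unfolding lt by auto
      show ?thesis
      proof (cases "\<beta> \<in> X")
        case bX: True
        show ?thesis
        proof (cases "\<beta> \<in> Y")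
          case bY: True
          have "\<beta> \<in> X \<inter> Y" using bX bY by blast
          thus ?thesis unfolding ins[of X] ins[of Y] ins[of "X \<inter> Y"] using bX bY
            helper2[OF bS IH[OF cX cY] cX cY bX] by simp
        next
          case bY: False
          have "\<beta> \<notin> X \<inter> Y" using bY by blast
          thus ?thesis unfolding ins[of X] ins[of Y] ins[of "X \<inter> Y"] using bX bY
            helper1[OF bS IH[OF cX cY] cX cY bX] by simp
        qed
      next
        case bX: False
        have nXY: "\<beta> \<notin> X \<inter> Y" using bX by blast
        show ?thesis
        proof (cases "\<beta> \<in> Y")
          case bY: True
          have "scomm (G (insert \<beta> (Y \<inter> {..<\<beta>}))) (G (X \<inter> {..<\<beta>})) (G (Y \<inter> X \<inter> {..<\<beta>}))"
            by (rule helper1[OF bS IH[OF cY cX] cY cX bY])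
          hence "scomm (G (X \<inter> {..<\<beta>})) (G (insert \<beta> (Y \<inter> {..<\<beta>}))) (G (Y \<inter> X \<inter> {..<\<beta>}))"
            using scomm_flip G_sub by blast
          moreover have "Y \<inter> X = X \<inter> Y" by blast
          ultimately show ?thesis unfolding ins[of X] ins[of Y] ins[of "X \<inter> Y"] using bX bY nXY by simp
        next
          case bY: False
          thus ?thesis unfolding ins[of X] ins[of Y] ins[of "X \<inter> Y"] using bX bY nXY IH[OF cX cY] by simp
        qed
      qed
    qed
  qed
qed

end

context filt begin

lemma scomm_closed:
  assumes cX: "closed X" and cY: "closed Y"
  shows "scomm (G X) (G Y) (G (X \<inter> Y))"
  unfolding scomm_def
proof (intro ballI impI)
  fix a c assume a: "a \<in> G X" and c: "c \<in> G Y" and ac: "inf a c = bot"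
  obtain d1 where d1: "a \<in> G (X \<inter> {..<d1})" using cover_all[OF closed_Sc[OF cX] a] by blast
  obtain d2 where d2: "c \<in> G (Y \<inter> {..<d2})" using cover_all[OF closed_Sc[OF cY] c] by blast
  define d where "d = max d1 d2"
  have "G (X \<inter> {..<d1}) \<subseteq> G (X \<inter> {..<d})" by (rule G_mono) (auto simp: d_def less_max_iff_disj)
  hence "a \<in> G (X \<inter> {..<d})" using d1 by blast
  moreover have "G (Y \<inter> {..<d2}) \<subseteq> G (Y \<inter> {..<d})" by (rule G_mono) (auto simp: d_def less_max_iff_disj)
  hence "c \<in> G (Y \<inter> {..<d})" using d2 by blast
  moreover have "scomm (G (X \<inter> {..<d})) (G (Y \<inter> {..<d})) (G (X \<inter> Y \<inter> {..<d}))"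
    using scomm_lt cX cY by blast
  ultimately obtain e where e: "e \<in> G (X \<inter> Y \<inter> {..<d})" "a \<le> e" "inf e c = bot"
    using ac unfolding scomm_def by blast
  have "G (X \<inter> Y \<inter> {..<d}) \<subseteq> G (X \<inter> Y)" by (rule G_mono) auto
  thus "\<exists>e\<in>G (X \<inter> Y). a \<le> e \<and> inf e c = bot" using e by blast
qed

lemma point_closed:
  assumes bS: "\<beta> \<in> Sc"
    and sup: "\<And>r. r \<in> Rr \<beta> \<Longrightarrow> \<exists>X. countable X \<and> closed X \<and> X \<subseteq> {..<\<beta>} \<and> r \<in> G X"
  shows "\<exists>X. countable X \<and> closed X \<and> X \<subseteq> {..\<beta>} \<and> \<beta> \<in> X"
proof -
  have "\<forall>r\<in>Rr \<beta>. \<exists>X. countable X \<and> closed X \<and> X \<subseteq> {..<\<beta>} \<and> r \<in> G X" using sup by blast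
  then obtain Xr where Xr: "\<forall>r\<in>Rr \<beta>. countable (Xr r) \<and> closed (Xr r) \<and> Xr r \<subseteq> {..<\<beta>} \<and> r \<in> G (Xr r)"
    by (rule bchoice[elim_format]) blast
  define X0 where "X0 = (\<Union>r\<in>Rr \<beta>. Xr r)"
  have cX0: "countable X0" unfolding X0_def using Xr Rr_count[OF bS] by (intro countable_UN) auto
  have clX0: "closed X0" unfolding X0_def using Xr by (intro closed_Union) auto
  have X0l: "X0 \<subseteq> {..<\<beta>}" unfolding X0_def using Xr by blast
  have RX0: "Rr \<beta> \<subseteq> G X0"
  proof
    fix r assume r: "r \<in> Rr \<beta>"
    hence "r \<in> G (Xr r)" using Xr by blast
    moreover have "G (Xr r) \<subseteq> G X0" by (rule G_mono) (use r in \<open>auto simp: X0_def\<close>)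
    ultimately show "r \<in> G X0" by blast
  qed
  have "closed (insert \<beta> X0)" unfolding closed_def
  proof (intro conjI ballI)
    show "insert \<beta> X0 \<subseteq> Sc" using bS closed_Sc[OF clX0] by blast
    fix b assume b: "b \<in> insert \<beta> X0"
    show "Rr b \<subseteq> G (insert \<beta> X0 \<inter> {..<b})"
    proof (cases "b = \<beta>")
      case True
      have "insert \<beta> X0 \<inter> {..<b} = X0" using True X0l by auto
      thus ?thesis using RX0 True by simp
    next
      case False
      hence bX: "b \<in> X0" using b by blast
      hence "Rr b \<subseteq> G (X0 \<inter> {..<b})" using clX0 unfolding closed_def by blast
      moreover have "G (X0 \<inter> {..<b}) \<subseteq> G (insert \<beta> X0 \<inter> {..<b})" by (rule G_mono) blast
      ultimately show ?thesis by blast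
    qed
  qed
  moreover have "insert \<beta> X0 \<subseteq> {..\<beta>}" using X0l by auto
  ultimately show ?thesis using cX0 by (intro exI[of _ "insert \<beta> X0"]) simp
qed

lemma supp_Bf: "\<forall>a\<in>Bf \<alpha>. \<exists>X. countable X \<and> closed X \<and> X \<subseteq> {..<\<alpha>} \<and> a \<in> G X"
proof (induction \<alpha> rule: less_induct)
  case (less \<alpha>)
  have c0: "closed {}" unfolding closed_def by simp
  show ?case
  proof (cases \<alpha> rule: trichotomy_cases)
    case min
    hence "Bf \<alpha> = {bot, top}" by (rule Bf_min)
    moreover have "bot \<in> G {}" by (rule subalgD(1)[OF G_sub])
    moreover have "top \<in> G {}" by (rule subalgD(2)[OF G_sub])
    ultimately show ?thesis using c0 by auto
  next
    case lim
    show ?thesis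
    proof
      fix a assume "a \<in> Bf \<alpha>"
      then obtain b where b: "b < \<alpha>" "a \<in> Bf b" using Bf_lim[OF lim] by blast
      have "\<forall>a\<in>Bf b. \<exists>X. countable X \<and> closed X \<and> X \<subseteq> {..<b} \<and> a \<in> G X" using less b(1) by (rule meta_mp)
      then obtain X where X: "countable X" "closed X" "X \<subseteq> {..<b}" "a \<in> G X" using b(2) by blast
      have "{..<b} \<subseteq> {..<\<alpha>}" using b(1) by auto
      hence "X \<subseteq> {..<\<alpha>}" using X(3) by (rule subset_trans[rotated])
      thus "\<exists>X. countable X \<and> closed X \<and> X \<subseteq> {..<\<alpha>} \<and> a \<in> G X" using X by (intro exI[of _ X]) simp
    qed
  next
    case (succ \<beta>)
    have bS: "\<beta> \<in> Sc" using succ unfolding Sc_def by blast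
    have bl: "\<beta> < \<alpha>" using succ unfolding is_succ_def by blast
    have sca: "sc \<beta> = \<alpha>" using succ_unique[OF sc_succ[OF bS] succ] .
    define T where "T = {z. \<exists>X. countable X \<and> closed X \<and> X \<subseteq> {..<\<alpha>} \<and> z \<in> G X}"
    have Tin: "z \<in> T" if "countable X" "closed X" "X \<subseteq> {..<\<alpha>}" "z \<in> G X" for z X
      unfolding T_def using that by (intro CollectI exI[of _ X]) simp
    have Tout: "\<exists>X. countable X \<and> closed X \<and> X \<subseteq> {..<\<alpha>} \<and> z \<in> G X" if "z \<in> T" for z
      using that unfolding T_def by (rule CollectD)
    have IHb: "\<exists>X. countable X \<and> closed X \<and> X \<subseteq> {..<\<beta>} \<and> z \<in> G X" if "z \<in> Bf \<beta>" for z
    proof -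
      have "\<forall>a\<in>Bf \<beta>. \<exists>X. countable X \<and> closed X \<and> X \<subseteq> {..<\<beta>} \<and> a \<in> G X" using less bl by (rule meta_mp)
      thus ?thesis using that by (rule bspec)
    qed
    have ba: "{..<\<beta>} \<subseteq> {..<\<alpha>}" using bl by auto
    have Tsub: "subalgebra T" unfolding subalgebra_def
    proof (intro conjI ballI)
      show "bot \<in> T" by (rule Tin[OF _ c0 _ subalgD(1)[OF G_sub]]) simp_all
      show "top \<in> T" by (rule Tin[OF _ c0 _ subalgD(2)[OF G_sub]]) simp_all
      fix x y assume "x \<in> T" "y \<in> T"
      then obtain X Y where X: "countable X" "closed X" "X \<subseteq> {..<\<alpha>}" "x \<in> G X"
        and Y: "countable Y" "closed Y" "Y \<subseteq> {..<\<alpha>}" "y \<in> G Y" using Tout by metis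
      have gx: "x \<in> G (X \<union> Y)" using X(4) G_mono[of X "X \<union> Y"] by blast
      have gy: "y \<in> G (X \<union> Y)" using Y(4) G_mono[of Y "X \<union> Y"] by blast
      have p: "countable (X \<union> Y)" "closed (X \<union> Y)" "X \<union> Y \<subseteq> {..<\<alpha>}"
        using X Y closed_Un by auto
      show "inf x y \<in> T" by (rule Tin[OF p subalgD(3)[OF G_sub gx gy]])
      show "sup x y \<in> T" by (rule Tin[OF p subalgD(4)[OF G_sub gx gy]])
    next
      fix x assume "x \<in> T"
      then obtain X where X: "countable X" "closed X" "X \<subseteq> {..<\<alpha>}" "x \<in> G X" using Tout by metis
      show "- x \<in> T" by (rule Tin[OF X(1-3) subalgD(5)[OF G_sub X(4)]])
    qed
    have BT: "Bf \<beta> \<subseteq> T"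
    proof
      fix a assume "a \<in> Bf \<beta>"
      then obtain X where X: "countable X" "closed X" "X \<subseteq> {..<\<beta>}" "a \<in> G X" using IHb by metis
      have "X \<subseteq> {..<\<alpha>}" using X(3) ba by (rule subset_trans)
      thus "a \<in> T" by (rule Tin[OF X(1,2) _ X(4)])
    qed
    have "\<exists>X. countable X \<and> closed X \<and> X \<subseteq> {..\<beta>} \<and> \<beta> \<in> X"
    proof (rule point_closed[OF bS])
      fix r assume "r \<in> Rr \<beta>"
      hence "r \<in> Bf \<beta>" using Rr_Bf[OF bS] by blast
      thus "\<exists>X. countable X \<and> closed X \<and> X \<subseteq> {..<\<beta>} \<and> r \<in> G X" by (rule IHb)
    qed
    then obtain X1 where X1: "countable X1" "closed X1" "X1 \<subseteq> {..\<beta>}" "\<beta> \<in> X1" by blast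
    have X1a: "X1 \<subseteq> {..<\<alpha>}" using X1(3) bl by auto
    have ST: "Ss \<beta> \<subseteq> T"
    proof
      fix z assume "z \<in> Ss \<beta>"
      hence "z \<in> G X1" using Ss_G[OF X1(4)] by blast
      thus "z \<in> T" by (rule Tin[OF X1(1,2) X1a])
    qed
    have "Bf \<alpha> = generated (Bf \<beta> \<union> Ss \<beta>)" using Bf_sc[OF bS] sca by simp
    also have "\<dots> \<subseteq> T" by (rule generated_least[OF Tsub]) (use BT ST in blast)
    finally have BfT: "Bf \<alpha> \<subseteq> T" .
    show ?thesis
    proof
      fix a assume "a \<in> Bf \<alpha>"
      thus "\<exists>X. countable X \<and> closed X \<and> X \<subseteq> {..<\<alpha>} \<and> a \<in> G X" using BfT Tout by blast
    qed
  qed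
qed

lemma supp_elem: "\<exists>X. countable X \<and> closed X \<and> a \<in> G X"
proof -
  obtain \<alpha> where a: "a \<in> Bf \<alpha>" using Bf_all by blast
  have "\<exists>X. countable X \<and> closed X \<and> X \<subseteq> {..<\<alpha>} \<and> a \<in> G X" by (rule bspec[OF supp_Bf a])
  thus ?thesis by blast
qed

lemma supp_set: assumes "countable H" shows "\<exists>X. countable X \<and> closed X \<and> H \<subseteq> G X"
proof -
  have "\<forall>a\<in>H. \<exists>X. countable X \<and> closed X \<and> a \<in> G X" using supp_elem by blast
  then obtain Xa where Xa: "\<forall>a\<in>H. countable (Xa a) \<and> closed (Xa a) \<and> a \<in> G (Xa a)"
    by (rule bchoice[elim_format]) blast
  define X where "X = (\<Union>a\<in>H. Xa a)"
  have "countable X" unfolding X_def using Xa assms by (intro countable_UN) auto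
  moreover have "closed X" unfolding X_def using Xa by (intro closed_Union) auto
  moreover have "H \<subseteq> G X"
  proof
    fix a assume a: "a \<in> H"
    hence "a \<in> G (Xa a)" using Xa by blast
    moreover have "G (Xa a) \<subseteq> G X" by (rule G_mono) (use a in \<open>auto simp: X_def\<close>)
    ultimately show "a \<in> G X" by blast
  qed
  ultimately show ?thesis by blast
qed

lemma point_closed2: assumes "\<beta> \<in> Sc" shows "\<exists>X. countable X \<and> closed X \<and> \<beta> \<in> X"
proof -
  have "\<exists>X. countable X \<and> closed X \<and> X \<subseteq> {..\<beta>} \<and> \<beta> \<in> X"
  proof (rule point_closed[OF assms])
    fix r assume "r \<in> Rr \<beta>"
    hence "r \<in> Bf \<beta>" using Rr_Bf[OF assms] by blast
    thus "\<exists>X. countable X \<and> closed X \<and> X \<subseteq> {..<\<beta>} \<and> r \<in> G X" by (rule bspec[OF supp_Bf])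
  qed
  thus ?thesis by blast
qed

lemma closure_countable: assumes "countable D" "D \<subseteq> Sc"
  shows "\<exists>X. countable X \<and> closed X \<and> D \<subseteq> X"
proof -
  have "\<forall>d\<in>D. \<exists>X. countable X \<and> closed X \<and> d \<in> X" using point_closed2 assms(2) by blast
  then obtain Xd where Xd: "\<forall>d\<in>D. countable (Xd d) \<and> closed (Xd d) \<and> d \<in> Xd d"
    by (rule bchoice[elim_format]) blast
  show ?thesis
    using Xd assms(1) by (intro exI[of _ "\<Union>d\<in>D. Xd d"] conjI countable_UN closed_Union) auto
qed

lemma countable_G: "countable X \<Longrightarrow> X \<subseteq> Sc \<Longrightarrow> countable (G X)"
  unfolding G_def by (intro countable_generated countable_UN) (auto intro: Ss_count)

end

lemma ba_meet_split: "inf (inf a b) (x::'a::boolean_algebra) = inf (inf a x) (inf b x)"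
  by (simp add: inf_aci)

lemma ba_compl_split: "inf (- a) (x::'a::boolean_algebra) = inf x (- inf a x)"
  by (simp add: inf_sup_distrib1 inf_aci)

lemma ba_split: "(p::'a::boolean_algebra) = sup (inf p y) (inf p (- y))"
  by (simp add: inf_sup_distrib1[symmetric])

lemma shannon:
  "inf (beval P v) (v n) = inf (beval P (v(n:=top))) (v n) \<and>
   inf (beval P v) (- v n) = inf (beval P (v(n:=bot))) (- v n)"
proof (induction P)
  case (Var i) thus ?case by (cases "i = n") simp_all
next
  case (Meet p q)
  thus ?case by (simp only: beval.simps ba_meet_split[of "beval p v" "beval q v" "v n"]
      ba_meet_split[of "beval p (v(n:=top))" "beval q (v(n:=top))" "v n"]
      ba_meet_split[of "beval p v" "beval q v" "- v n"]
      ba_meet_split[of "beval p (v(n:=bot))" "beval q (v(n:=bot))" "- v n"])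
next
  case (Join p q)
  thus ?case by (simp only: beval.simps inf_sup_distrib2)
next
  case (Compl p)
  thus ?case by (simp only: beval.simps ba_compl_split[of "beval p v" "v n"]
      ba_compl_split[of "beval p (v(n:=top))" "v n"]
      ba_compl_split[of "beval p v" "- v n"]
      ba_compl_split[of "beval p (v(n:=bot))" "- v n"])
qed simp_all

primrec ren :: "(nat \<Rightarrow> nat) \<Rightarrow> bpoly \<Rightarrow> bpoly" where
  "ren f (Var i) = Var (f i)"
| "ren f Zero = Zero"
| "ren f One = One"
| "ren f (Meet p q) = Meet (ren f p) (ren f q)"
| "ren f (Join p q) = Join (ren f p) (ren f q)"
| "ren f (Compl p) = Compl (ren f p)"

lemma beval_ren: "beval (ren f P) v = beval P (v \<circ> f)"
  by (induction P) auto

context filt begin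

lemma interp:
  assumes cZ: "\<And>i. closed (Z i)" and cD: "closed D"
    and disj: "\<And>i j. i < N \<Longrightarrow> j < N \<Longrightarrow> i \<noteq> j \<Longrightarrow> Z i \<inter> Z j \<subseteq> D"
  shows "n \<le> N \<Longrightarrow> \<forall>P v. (\<forall>i<n. v i \<in> G (Z i)) \<longrightarrow> (\<forall>i. n \<le> i \<longrightarrow> v i \<in> G D) \<longrightarrow> beval P v = bot \<longrightarrow>
     (\<exists>rm rp. (\<forall>i<n. rm i \<in> G D \<and> rp i \<in> G D \<and> rm i \<le> v i \<and> v i \<le> rp i) \<and>
        (\<forall>eps. beval P (\<lambda>i. if i < n then (if eps i then rp i else rm i) else v i) = bot))"
proof (induction n)
  case 0 show ?case by simp
next
  case (Suc n)
  hence nN: "n < N" by simp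
  note IH = Suc.IH[OF less_imp_le[OF nN]]
  show ?case
  proof (intro allI impI)
    fix P v assume vZ: "\<forall>i<Suc n. v i \<in> G (Z i)" and vD: "\<forall>i. Suc n \<le> i \<longrightarrow> v i \<in> G D"
      and P0: "beval P v = bot"
    define Y where "Y = (\<Union>i\<in>{..<n}. Z i) \<union> D"
    have cY: "closed Y" unfolding Y_def
      by (intro closed_Un closed_Union cD) (auto intro: cZ)
    have YZ: "Y \<inter> Z n \<subseteq> D"
    proof
      fix x assume "x \<in> Y \<inter> Z n"
      then consider (a) i where "i < n" "x \<in> Z i" "x \<in> Z n" | (b) "x \<in> D" unfolding Y_def by blast
      thus "x \<in> D"
      proof cases
        case (a i) thus ?thesis using disj[of i n] nN by auto
      qed simp
    qed
    have sc0: "scomm (G Y) (G (Z n)) (G (Y \<inter> Z n))" by (rule scomm_closed[OF cY cZ])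
    have sc1: "scomm (G (Z n)) (G Y) (G (Y \<inter> Z n))" by (rule scomm_flip[OF sc0 G_sub])
    have sc: "scomm (G (Z n)) (G Y) (G D)" by (rule scomm_mono[OF sc1 order_refl order_refl G_mono[OF YZ]])
    have ZY: "G (Z i) \<subseteq> G Y" if "i < n" for i unfolding Y_def by (rule G_mono) (use that in blast)
    have DY: "G D \<subseteq> G Y" unfolding Y_def by (rule G_mono) blast
    have GYsub: "subalgebra (G Y)" by (rule G_sub)
    define x where "x = v n"
    have xZ: "x \<in> G (Z n)" using vZ unfolding x_def by simp
    define Q1 where "Q1 = beval P (v(n:=top))"
    define Q2 where "Q2 = beval P (v(n:=bot))"
    have inY: "(v(n:=c)) i \<in> G Y" if "c \<in> G Y" for c i
    proof (cases "i < n")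
      case True thus ?thesis using vZ ZY[OF True] by auto
    next
      case False
      show ?thesis
      proof (cases "i = n")
        case False
        hence "Suc n \<le> i" using \<open>\<not> i < n\<close> by simp
        thus ?thesis using vD DY False by auto
      qed (use that in simp)
    qed
    have Q1Y: "Q1 \<in> G Y" unfolding Q1_def by (rule beval_in[OF GYsub inY[OF subalgD(2)[OF GYsub]]])
    have Q2Y: "Q2 \<in> G Y" unfolding Q2_def by (rule beval_in[OF GYsub inY[OF subalgD(1)[OF GYsub]]])
    have sh: "inf (beval P v) x = inf Q1 x" "inf (beval P v) (- x) = inf Q2 (- x)"
      using shannon[of P v n] unfolding Q1_def Q2_def x_def by blast+
    have h1: "inf x Q1 = bot" using sh(1) P0 by (simp add: inf_commute)
    have h2: "inf (- x) Q2 = bot" using sh(2) P0 by (simp add: inf_commute)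
    obtain e1 where e1: "e1 \<in> G D" "x \<le> e1" "inf e1 Q1 = bot"
      using sc xZ Q1Y h1 unfolding scomm_def by blast
    have nxZ: "- x \<in> G (Z n)" by (rule subalgD(5)[OF G_sub xZ])
    obtain e2 where e2: "e2 \<in> G D" "- x \<le> e2" "inf e2 Q2 = bot"
      using sc nxZ Q2Y h2 unfolding scomm_def by blast
    have ne2: "- e2 \<le> x" using e2(2) by (simp add: compl_le_swap2)
    have ne1: "- e1 \<le> - x" using e1(2) by simp
    have Prp: "beval P (v(n:=e1)) = bot"
    proof -
      let ?w = "v(n:=e1)"
      have s1: "inf (beval P ?w) e1 = inf Q1 e1" using conjunct1[OF shannon[of P ?w n]] unfolding Q1_def by simp
      have s2: "inf (beval P ?w) (- e1) = inf Q2 (- e1)" using conjunct2[OF shannon[of P ?w n]] unfolding Q2_def by simp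
      have h2': "inf Q2 (- x) = bot" using h2 by (simp add: inf_commute)
      have "inf Q2 (- e1) \<le> inf Q2 (- x)" using ne1 by (rule inf_mono[OF order_refl])
      hence "inf Q2 (- e1) = bot" unfolding h2' by (rule le_bot)
      hence "sup (inf (beval P ?w) e1) (inf (beval P ?w) (- e1)) = bot" using s1 s2 e1(3) by (simp add: inf_commute)
      thus ?thesis using ba_split[of "beval P ?w" e1] by simp
    qed
    have Prm: "beval P (v(n:=- e2)) = bot"
    proof -
      let ?w = "v(n:=- e2)"
      have s1: "inf (beval P ?w) (- e2) = inf Q1 (- e2)" using conjunct1[OF shannon[of P ?w n]] unfolding Q1_def by simp
      have s2: "inf (beval P ?w) (- (- e2)) = inf Q2 (- (- e2))" using conjunct2[OF shannon[of P ?w n]] unfolding Q2_def by simp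
      have h1': "inf Q1 x = bot" using h1 by (simp add: inf_commute)
      have "inf Q1 (- e2) \<le> inf Q1 x" using ne2 by (rule inf_mono[OF order_refl])
      hence "inf Q1 (- e2) = bot" unfolding h1' by (rule le_bot)
      hence "sup (inf (beval P ?w) (- e2)) (inf (beval P ?w) (- (- e2))) = bot" using s1 s2 e2(3) by (simp add: inf_commute)
      thus ?thesis using ba_split[of "beval P ?w" "- e2"] by simp
    qed
    define k where "k = Suc (Max (insert n (bvars P)))"
    have fin: "finite (insert n (bvars P))" using finite_bvars by simp
    have kn: "n < k" unfolding k_def using Max_ge[OF fin, of n] by simp
    have kP: "k \<notin> bvars P"
    proof
      assume "k \<in> bvars P"
      hence "k \<le> Max (insert n (bvars P))" using Max_ge[OF fin] by blast
      thus False unfolding k_def by simp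
    qed
    define f where "f i = (if i = n then k else i)" for i
    define P' where "P' = Join P (ren f P)"
    define v' where "v' = v(n:=e1, k:=- e2)"
    have v'1: "\<forall>i<n. v' i \<in> G (Z i)" using vZ kn unfolding v'_def by auto
    have v'2: "\<forall>i. n \<le> i \<longrightarrow> v' i \<in> G D"
    proof (intro allI impI)
      fix i assume "n \<le> i"
      show "v' i \<in> G D"
      proof (cases "i = k")
        case True thus ?thesis unfolding v'_def using subalgD(5)[OF G_sub e2(1)] by simp
      next
        case False
        show ?thesis
        proof (cases "i = n")
          case True thus ?thesis unfolding v'_def using e1(1) kn by simp
        next
          case False
          hence "Suc n \<le> i" using \<open>n \<le> i\<close> by simp
          thus ?thesis unfolding v'_def using vD \<open>i \<noteq> k\<close> False by simp
        qed
      qed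
    qed
    have c1: "beval P v' = beval P (v(n:=e1))"
      by (rule beval_cong) (use kP in \<open>auto simp: v'_def\<close>)
    have c2: "beval P (v' \<circ> f) = beval P (v(n:=- e2))"
      by (rule beval_cong) (use kP kn in \<open>auto simp: v'_def f_def\<close>)
    have P'0: "beval P' v' = bot" unfolding P'_def using c1 c2 Prp Prm by (simp add: beval_ren)
    obtain rm' rp' where r': "\<forall>i<n. rm' i \<in> G D \<and> rp' i \<in> G D \<and> rm' i \<le> v' i \<and> v' i \<le> rp' i"
      and r'e: "\<forall>eps. beval P' (\<lambda>i. if i < n then (if eps i then rp' i else rm' i) else v' i) = bot"
      using IH v'1 v'2 P'0 by blast
    define rm where "rm = rm'(n:=- e2)"
    define rp where "rp = rp'(n:=e1)"
    have vv: "v' i = v i" if "i < n" for i using that kn unfolding v'_def by auto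
    have bounds: "\<forall>i<Suc n. rm i \<in> G D \<and> rp i \<in> G D \<and> rm i \<le> v i \<and> v i \<le> rp i"
    proof (intro allI impI)
      fix i assume "i < Suc n"
      show "rm i \<in> G D \<and> rp i \<in> G D \<and> rm i \<le> v i \<and> v i \<le> rp i"
      proof (cases "i = n")
        case True thus ?thesis unfolding rm_def rp_def
          using subalgD(5)[OF G_sub e2(1)] e1(1,2) ne2 unfolding x_def by simp
      next
        case False
        hence "i < n" using \<open>i < Suc n\<close> by simp
        thus ?thesis unfolding rm_def rp_def using r' vv[of i] False by auto
      qed
    qed
    have evs: "beval P (\<lambda>i. if i < Suc n then (if eps i then rp i else rm i) else v i) = bot" for eps
    proof -
      define W where "W = (\<lambda>i. if i < n then (if eps i then rp' i else rm' i) else v' i)"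
      have W0: "beval P' W = bot" using r'e unfolding W_def by blast
      have sub: "beval P W = bot" "beval P (W \<circ> f) = bot"
        using W0 unfolding P'_def by (simp_all add: beval_ren)
      show ?thesis
      proof (cases "eps n")
        case True
        have "beval P (\<lambda>i. if i < Suc n then (if eps i then rp i else rm i) else v i) = beval P W"
          by (rule beval_cong) (use True kP kn in \<open>auto simp: W_def rp_def rm_def v'_def\<close>)
        thus ?thesis using sub(1) by simp
      next
        case False
        have "beval P (\<lambda>i. if i < Suc n then (if eps i then rp i else rm i) else v i) = beval P (W \<circ> f)"
          by (rule beval_cong) (use False kP kn in \<open>auto simp: W_def rp_def rm_def v'_def f_def\<close>)
        thus ?thesis using sub(2) by simp
      qed
    qed
    show "\<exists>rm rp. (\<forall>i<Suc n. rm i \<in> G D \<and> rp i \<in> G D \<and> rm i \<le> v i \<and> v i \<le> rp i) \<and>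
        (\<forall>eps. beval P (\<lambda>i. if i < Suc n then (if eps i then rp i else rm i) else v i) = bot)"
      using bounds evs by blast
  qed
qed

end

theorem theorem4p2:
  fixes Bf :: "'i::wellorder \<Rightarrow> 'a::boolean_algebra set"
    and \<H> :: "'a set set"
  assumes "tight_sigma_filtration Bf"
    and "\<forall>H\<in>\<H>. countable H"
    and "(card_of \<H>, omega2) \<in> ordIso"
  shows "\<exists>\<H>'\<subseteq>\<H>. (card_of \<H>', omega2) \<in> ordIso \<and>
     (\<exists>R. countable R \<and> subalgebra R \<and>
       (\<forall>n P (Hs :: nat \<Rightarrow> 'a set) (a :: nat \<Rightarrow> 'a).
          bvars P \<subseteq> {..<n} \<longrightarrow> (\<forall>i<n. Hs i \<in> \<H>') \<longrightarrow> inj_on Hs {..<n} \<longrightarrow>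
          (\<forall>i<n. a i \<in> Hs i) \<longrightarrow> beval P a = bot \<longrightarrow>
          (\<exists>rm rp. (\<forall>i<n. rm i \<in> R \<and> rp i \<in> R \<and> rm i \<le> a i \<and> a i \<le> rp i) \<and>
                   (\<forall>eps :: nat \<Rightarrow> bool. beval P (\<lambda>i. if eps i then rp i else rm i) = bot))))"
proof -
  interpret filt Bf by unfold_locales (rule assms(1))
  have "\<forall>H\<in>\<H>. \<exists>X. countable X \<and> closed X \<and> H \<subseteq> G X"
  proof
    fix H assume "H \<in> \<H>"
    hence "countable H" using assms(2) by blast
    thus "\<exists>X. countable X \<and> closed X \<and> H \<subseteq> G X" by (rule supp_set)
  qed
  then obtain Xf where Xf: "\<forall>H\<in>\<H>. countable (Xf H) \<and> closed (Xf H) \<and> H \<subseteq> G (Xf H)"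
    by (rule bchoice[elim_format]) blast
  have wd: "\<exists>H'\<subseteq>\<H>. |H'| =o cardSuc w1 \<and>
           (\<exists>D. countable D \<and> (\<forall>h1\<in>H'. \<forall>h2\<in>H'. h1 \<noteq> h2 \<longrightarrow> Xf h1 \<inter> Xf h2 \<subseteq> D))"
    by (rule weak_delta[of \<H> Xf, OF assms(3)]) (use Xf in blast)
  obtain \<H>' where H': "\<H>' \<subseteq> \<H>" "(card_of \<H>', omega2) \<in> ordIso"
    and "\<exists>D. countable D \<and> (\<forall>h1\<in>\<H>'. \<forall>h2\<in>\<H>'. h1 \<noteq> h2 \<longrightarrow> Xf h1 \<inter> Xf h2 \<subseteq> D)"
    using wd by blast
  then obtain D where D: "countable D" "\<forall>h1\<in>\<H>'. \<forall>h2\<in>\<H>'. h1 \<noteq> h2 \<longrightarrow> Xf h1 \<inter> Xf h2 \<subseteq> D" by blast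
  have "countable (D \<inter> Sc)" using D(1) by simp
  then obtain D' where D': "countable D'" "closed D'" "D \<inter> Sc \<subseteq> D'"
    using closure_countable[of "D \<inter> Sc"] by auto
  have RC: "countable (G D')" by (rule countable_G[OF D'(1) closed_Sc[OF D'(2)]])
  have RS: "subalgebra (G D')" by (rule G_sub)
  have main: "\<exists>rm rp. (\<forall>i<n. rm i \<in> G D' \<and> rp i \<in> G D' \<and> rm i \<le> a i \<and> a i \<le> rp i) \<and>
                   (\<forall>eps :: nat \<Rightarrow> bool. beval P (\<lambda>i. if eps i then rp i else rm i) = bot)"
    if bv: "bvars P \<subseteq> {..<n}" and HsH: "\<forall>i<n. Hs i \<in> \<H>'" and inj: "inj_on Hs {..<n}"
      and ai: "\<forall>i<n. a i \<in> Hs i" and Pa: "beval P a = bot" for n P Hs a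
  proof -
    define Z where "Z i = (if i < n then Xf (Hs i) else {})" for i
    have cZ: "closed (Z i)" for i
    proof (cases "i < n")
      case True
      hence "Hs i \<in> \<H>" using HsH H'(1) by blast
      thus ?thesis unfolding Z_def using True Xf by simp
    qed (simp add: Z_def closed_def)
    have disj: "Z i \<inter> Z j \<subseteq> D'" if "i < n" "j < n" "i \<noteq> j" for i j
    proof -
      have "Hs i \<noteq> Hs j" using inj that unfolding inj_on_def by blast
      moreover have "Hs i \<in> \<H>'" "Hs j \<in> \<H>'" using HsH that by blast+
      ultimately have "Xf (Hs i) \<inter> Xf (Hs j) \<subseteq> D" using D(2) by blast
      moreover have "Xf (Hs i) \<subseteq> Sc" using cZ[of i] that closed_Sc unfolding Z_def by simp
      ultimately show ?thesis unfolding Z_def using that D'(3) by auto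
    qed
    define v where "v i = (if i < n then a i else bot)" for i
    have v1: "\<forall>i<n. v i \<in> G (Z i)"
    proof (intro allI impI)
      fix i assume i: "i < n"
      hence "Hs i \<in> \<H>" using HsH H'(1) by blast
      hence "Hs i \<subseteq> G (Xf (Hs i))" using Xf by blast
      thus "v i \<in> G (Z i)" using ai i unfolding v_def Z_def by auto
    qed
    have v2: "\<forall>i. n \<le> i \<longrightarrow> v i \<in> G D'" unfolding v_def using subalgD(1)[OF G_sub, of D'] by auto
    have "beval P v = beval P a" by (rule beval_cong) (use bv in \<open>auto simp: v_def\<close>)
    hence Pv: "beval P v = bot" using Pa by simp
    have "\<exists>rm rp. (\<forall>i<n. rm i \<in> G D' \<and> rp i \<in> G D' \<and> rm i \<le> v i \<and> v i \<le> rp i) \<and>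
        (\<forall>eps. beval P (\<lambda>i. if i < n then (if eps i then rp i else rm i) else v i) = bot)"
    proof -
      have I: "\<forall>P v. (\<forall>i<n. v i \<in> G (Z i)) \<longrightarrow> (\<forall>i. n \<le> i \<longrightarrow> v i \<in> G D') \<longrightarrow> beval P v = bot \<longrightarrow>
     (\<exists>rm rp. (\<forall>i<n. rm i \<in> G D' \<and> rp i \<in> G D' \<and> rm i \<le> v i \<and> v i \<le> rp i) \<and>
        (\<forall>eps. beval P (\<lambda>i. if i < n then (if eps i then rp i else rm i) else v i) = bot))"
        by (rule interp[OF cZ D'(2) disj order_refl])
      show ?thesis using mp[OF mp[OF mp[OF spec[OF spec[OF I, of P], of v] v1] v2] Pv] .
    qed
    then obtain rm rp where r: "\<forall>i<n. rm i \<in> G D' \<and> rp i \<in> G D' \<and> rm i \<le> v i \<and> v i \<le> rp i"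
      and re: "\<forall>eps. beval P (\<lambda>i. if i < n then (if eps i then rp i else rm i) else v i) = bot" by blast
    have "\<forall>i<n. rm i \<in> G D' \<and> rp i \<in> G D' \<and> rm i \<le> a i \<and> a i \<le> rp i" using r unfolding v_def by auto
    moreover have "\<forall>eps :: nat \<Rightarrow> bool. beval P (\<lambda>i. if eps i then rp i else rm i) = bot"
    proof
      fix eps :: "nat \<Rightarrow> bool"
      have "beval P (\<lambda>i. if eps i then rp i else rm i) = beval P (\<lambda>i. if i < n then (if eps i then rp i else rm i) else v i)"
        by (rule beval_cong) (use bv in auto)
      thus "beval P (\<lambda>i. if eps i then rp i else rm i) = bot" using re by simp
    qed
    ultimately show ?thesis by blast
  qed
  show ?thesis
  proof (intro exI[of _ \<H>'] conjI exI[of _ "G D'"] RC RS H'(1) H'(2) allI impI)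
    fix n P and Hs :: "nat \<Rightarrow> 'a set" and a :: "nat \<Rightarrow> 'a"
    assume "bvars P \<subseteq> {..<n}" "\<forall>i<n. Hs i \<in> \<H>'" "inj_on Hs {..<n}" "\<forall>i<n. a i \<in> Hs i" "beval P a = bot"
    thus "\<exists>rm rp. (\<forall>i<n. rm i \<in> G D' \<and> rp i \<in> G D' \<and> rm i \<le> a i \<and> a i \<le> rp i) \<and>
                   (\<forall>eps :: nat \<Rightarrow> bool. beval P (\<lambda>i. if eps i then rp i else rm i) = bot)"
      by (rule main)
  qed
qed

end
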